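(* Let $\nu(\mathbb{R}^d\setminus\{0\})<\infty$ and assume (B) and (C) below hold with some $E\subset\mathbb{S}^{d-1}$ and $\kappa\ge0$. (a) For every $n\in\mathbb{N}$, $\theta\in E$ and $y\in\mathbb{R}^d$, $$\lim_{s\to\infty}\frac{\nu^{n*}(s\theta-y)}{\nu(s\theta)}=e^{\kappa(\theta\cdot y)}\,n\Big(\int e^{\kappa(\theta\cdot z)}\nu(z)\,dz\Big)^{n-1}.$$ (b) If the convergence in (C) is uniform in $(\theta,y)\in E\times D$ for every compact $D\subset\mathbb{R}^d$, then for every $n$ the convergence in (a) is uniform in $(\theta,y)$ on each set $E\times B(0,\varrho)$, $\varrho>0$.
   Context: Let $d\ge1$ and $\nu$ a Lévy measure on $\mathbb{R}^d\setminus\{0\}$; $\nu^{n*}$ is the density of the $n$-fold convolution of $\nu$. $\Gamma_E=\{y\ne0:y/|y|\in E\}$. (B) $\nu(dx)=\nu(x)dx$; there are nonincreasing $f:(0,\infty)\to(0,\infty)$ and $C_0>0$ with $\nu(x)\le C_0f(|x|)$, $\liminf_{r\to0^+}\frac{\nu(\{|x|>r\})}{f(r)r^d}>0$, and $K(r):=\sup_{|x|>1}\frac{1}{f(|x|)}\int_{|x-y|>r,|y|>r}f(|x-y|)f(|y|)dy$ decreases to $0$ as $r\to\infty$. (C) $\lim_{r\to\infty}\nu(r\theta-y)/\nu(r\theta)=e^{\kappa(\theta\cdot y)}$ for all $y\in\mathbb{R}^d$, $\theta\in E$, and $\inf_{x\in\Gamma_E}\nu(x)/f(|x|)>0$. 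*)

theory Defs
  imports "HOL-Analysis.Analysis"
begin

definition conv :: "('a::euclidean_space \<Rightarrow> real) \<Rightarrow> ('a \<Rightarrow> real) \<Rightarrow> 'a \<Rightarrow> real" where
  "conv g h x = (\<integral>y. g (x - y) * h y \<partial>lborel)"

text \<open>Density of the n-fold convolution nu^{n*}, n >= 1: nconv nu 1 = nu,
  nconv nu (n+1) = nu * nconv nu n.\<close>
definition nconv :: "('a::euclidean_space \<Rightarrow> real) \<Rightarrow> nat \<Rightarrow> 'a \<Rightarrow> real" where
  "nconv nu n = ((conv nu) ^^ (n - 1)) nu"

definition GammaE :: "'a::euclidean_space set \<Rightarrow> 'a set" where
  "GammaE E = {y. y \<noteq> 0 \<and> y /\<^sub>R norm y \<in> E}"

definition Kfun :: "(real \<Rightarrow> real) \<Rightarrow> 'a::euclidean_space itself \<Rightarrow> real \<Rightarrow> ennreal" where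
  "Kfun f _ r = (SUP x\<in>{x::'a. 1 < norm x}.
     \<integral>\<^sup>+ y. indicator {y. r < norm (x - y) \<and> r < norm y} y
            * ennreal (f (norm (x - y)) * f (norm y) / f (norm x)) \<partial>lborel)"

definition condB :: "('a::euclidean_space \<Rightarrow> real) \<Rightarrow> (real \<Rightarrow> real) \<Rightarrow> bool" where
  "condB nu f \<longleftrightarrow>
     (\<forall>r>0. 0 < f r) \<and> (\<forall>r s. 0 < r \<longrightarrow> r \<le> s \<longrightarrow> f s \<le> f r) \<and>
     (\<exists>C0>0. \<forall>x. x \<noteq> 0 \<longrightarrow> nu x \<le> C0 * f (norm x)) \<and>
     0 < Liminf (at_right (0::real))
           (\<lambda>r. ereal ((\<integral>x\<in>{x::'a. r < norm x}. nu x \<partial>lborel) / (f r * r ^ DIM('a)))) \<and>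
     (\<forall>r s. 0 < r \<longrightarrow> r \<le> s \<longrightarrow> Kfun f TYPE('a) s \<le> Kfun f TYPE('a) r) \<and>
     (Kfun f TYPE('a) \<longlongrightarrow> 0) at_top"

definition condC :: "('a::euclidean_space \<Rightarrow> real) \<Rightarrow> (real \<Rightarrow> real) \<Rightarrow> 'a set \<Rightarrow> real \<Rightarrow> bool" where
  "condC nu f E \<kappa> \<longleftrightarrow>
     (\<forall>\<theta>\<in>E. \<forall>y. ((\<lambda>r. nu (r *\<^sub>R \<theta> - y) / nu (r *\<^sub>R \<theta>)) \<longlongrightarrow> exp (\<kappa> * (\<theta> \<bullet> y))) at_top) \<and>
     (\<exists>c>0. \<forall>x\<in>GammaE E. c * f (norm x) \<le> nu x)"

end

theory Submission
  imports Defs "HOL-Analysis.Analysis"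
begin

lemma en3: fixes X A B C :: ennreal shows "X \<le> A \<or> X \<le> B \<or> X \<le> C \<Longrightarrow> X \<le> A + B + C"
  by (metis add.commute add_increasing2 zero_le)

lemma nn_integral_reflect:
  fixes F :: "'a::euclidean_space \<Rightarrow> ennreal"
  assumes [measurable]: "F \<in> borel_measurable borel"
  shows "(\<integral>\<^sup>+x. F (t - x) \<partial>lborel) = (\<integral>\<^sup>+x. F x \<partial>lborel)"
proof -
  have "(\<integral>\<^sup>+x. F x \<partial>lborel) = (\<integral>\<^sup>+x. F x \<partial>(density (distr lborel borel (\<lambda>x. t + (-1) *\<^sub>R x)) (\<lambda>_. \<bar>-1::real\<bar>^DIM('a))))"
    using lborel_affine[of "-1::real" t] by simp
  also have "\<dots> = (\<integral>\<^sup>+x. F (t - x) \<partial>lborel)"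
    by (simp add: nn_integral_density nn_integral_distr)
  finally show ?thesis ..
qed

lemma integral_reflect:
  fixes F :: "'a::euclidean_space \<Rightarrow> real"
  assumes [measurable]: "F \<in> borel_measurable borel"
  shows "(\<integral>x. F (t - x) \<partial>lborel) = (\<integral>x. F x \<partial>lborel)"
proof -
  have "(\<integral>x. F x \<partial>lborel) = (\<integral>x. F x \<partial>(density (distr lborel borel (\<lambda>x. t + (-1) *\<^sub>R x)) (\<lambda>_. \<bar>-1::real\<bar>^DIM('a))))"
    using lborel_affine[of "-1::real" t] by simp
  also have "\<dots> = (\<integral>x. F x \<partial>(distr lborel borel (\<lambda>x. t + (-1) *\<^sub>R x)))"
    by (simp add: density_1)
  also have "\<dots> = (\<integral>x. F (t - x) \<partial>lborel)"
    by (simp add: integral_distr)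
  finally show ?thesis ..
qed

lemma nn_integral_translate:
  fixes F :: "'a::euclidean_space \<Rightarrow> ennreal"
  assumes [measurable]: "F \<in> borel_measurable borel"
  shows "(\<integral>\<^sup>+x. F (x - t) \<partial>lborel) = (\<integral>\<^sup>+x. F x \<partial>lborel)"
proof -
  have "(\<integral>\<^sup>+x. F (x - t) \<partial>lborel) = (\<integral>\<^sup>+x. F (x - t) \<partial>(distr lborel borel ((+) t)))"
    by (simp add: lborel_distr_plus)
  also have "\<dots> = (\<integral>\<^sup>+x. F x \<partial>lborel)"
    by (simp add: nn_integral_distr)
  finally show ?thesis .
qed


lemma f_max_meas:
  fixes f :: "real \<Rightarrow> real"
  assumes "\<And>r s. 0 < r \<Longrightarrow> r \<le> s \<Longrightarrow> f s \<le> f r" "0 < e"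
  shows "(\<lambda>t. f (max t e)) \<in> borel_measurable borel"
proof -
  have "mono (\<lambda>t. - f (max t e))"
    by (rule monoI) (use assms in \<open>auto intro!: assms(1)\<close>)
  then have "(\<lambda>t. - f (max t e)) \<in> borel_measurable borel"
    by (rule borel_measurable_mono)
  then have "(\<lambda>t. - (- f (max t e))) \<in> borel_measurable borel"
    by measurable
  then show ?thesis by simp
qed

locale lsetup =
  fixes nu :: "'a::euclidean_space \<Rightarrow> real" and f :: "real \<Rightarrow> real"
    and E :: "'a set" and \<kappa> :: real and c C0 :: real and th0 :: 'a
  assumes nu_nonneg: "\<And>x. 0 \<le> nu x"
    and nu_meas[measurable]: "nu \<in> borel_measurable borel"
    and nu_int: "integrable lborel nu"
    and E_sph: "E \<subseteq> sphere 0 1"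
    and kappa: "0 \<le> \<kappa>"
    and f_pos: "\<And>r. 0 < r \<Longrightarrow> 0 < f r"
    and f_mono: "\<And>r s. 0 < r \<Longrightarrow> r \<le> s \<Longrightarrow> f s \<le> f r"
    and C0_pos: "0 < C0" and C0_up: "\<And>x. x \<noteq> 0 \<Longrightarrow> nu x \<le> C0 * f (norm x)"
    and c_pos: "0 < c" and c_low: "\<And>x. x \<in> GammaE E \<Longrightarrow> c * f (norm x) \<le> nu x"
    and Klim: "(Kfun f TYPE('a) \<longlongrightarrow> 0) at_top"
    and Clim: "\<And>\<theta> y. \<theta> \<in> E \<Longrightarrow> ((\<lambda>r. nu (r *\<^sub>R \<theta> - y) / nu (r *\<^sub>R \<theta>)) \<longlongrightarrow> exp (\<kappa> * (\<theta> \<bullet> y))) at_top"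
    and th0: "th0 \<in> E"
begin

lemma E_norm: "\<theta> \<in> E \<Longrightarrow> norm \<theta> = 1"
  using E_sph by auto

lemma ray_bounds:
  assumes "\<theta> \<in> E" "0 < s"
  shows "c * f s \<le> nu (s *\<^sub>R \<theta>)" "nu (s *\<^sub>R \<theta>) \<le> C0 * f s" "0 < nu (s *\<^sub>R \<theta>)"
proof -
  have n: "norm (s *\<^sub>R \<theta>) = s" using E_norm[OF assms(1)] assms(2) by simp
  have "s *\<^sub>R \<theta> \<in> GammaE E"
    using assms n unfolding GammaE_def by auto
  from c_low[OF this] show 1: "c * f s \<le> nu (s *\<^sub>R \<theta>)" using n by simp
  have "s *\<^sub>R \<theta> \<noteq> 0" using n assms by auto
  from C0_up[OF this] show "nu (s *\<^sub>R \<theta>) \<le> C0 * f s" using n by simp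
  show "0 < nu (s *\<^sub>R \<theta>)" using 1 c_pos f_pos[OF assms(2)]
    by (smt (verit) mult_pos_pos)
qed

lemma shift:
  assumes "0 \<le> R"
  shows "\<exists>M S0. 0 < M \<and> R < S0 \<and> (\<forall>t\<ge>S0. f (t - R) \<le> M * f t)"
proof -
  have "((\<lambda>r. nu (r *\<^sub>R th0 - R *\<^sub>R th0) / nu (r *\<^sub>R th0)) \<longlongrightarrow> exp (\<kappa> * (th0 \<bullet> (R *\<^sub>R th0)))) at_top"
    by (rule Clim[OF th0])
  then have "\<forall>\<^sub>F r in at_top. nu (r *\<^sub>R th0 - R *\<^sub>R th0) / nu (r *\<^sub>R th0) < exp (\<kappa> * (th0 \<bullet> (R *\<^sub>R th0))) + 1"
    by (rule order_tendstoD) simp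
  then obtain N where N: "\<And>r. r \<ge> N \<Longrightarrow> nu (r *\<^sub>R th0 - R *\<^sub>R th0) / nu (r *\<^sub>R th0) < exp (\<kappa> * (th0 \<bullet> (R *\<^sub>R th0))) + 1"
    by (auto simp: eventually_at_top_linorder)
  define e where "e = exp (\<kappa> * (th0 \<bullet> (R *\<^sub>R th0))) + 1"
  have e: "0 < e" unfolding e_def by (smt (verit) exp_gt_zero)
  define S0 where "S0 = max N (R + 1)"
  show ?thesis
  proof (intro exI conjI allI impI)
    show "0 < e * C0 / c" using e C0_pos c_pos by simp
    show "R < S0" unfolding S0_def by simp
    fix t assume t: "S0 \<le> t"
    have tR: "0 < t - R" "0 < t" using t assms unfolding S0_def by auto
    have q: "nu (t *\<^sub>R th0 - R *\<^sub>R th0) / nu (t *\<^sub>R th0) < e"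
      using N[of t] t unfolding S0_def e_def by auto
    have p: "0 < nu (t *\<^sub>R th0)" by (rule ray_bounds(3)[OF th0 tR(2)])
    have "c * f (t - R) \<le> nu ((t - R) *\<^sub>R th0)" by (rule ray_bounds(1)[OF th0 tR(1)])
    also have "\<dots> = nu (t *\<^sub>R th0 - R *\<^sub>R th0)" by (simp add: scaleR_diff_left)
    also have "\<dots> \<le> e * nu (t *\<^sub>R th0)" using q p by (simp add: divide_less_eq)
    also have "\<dots> \<le> e * (C0 * f t)" using ray_bounds(2)[OF th0 tR(2)] e by simp
    finally have "c * f (t - R) \<le> e * (C0 * f t)" .
    then show "f (t - R) \<le> e * C0 / c * f t" using c_pos by (simp add: field_simps)
  qed
qed

lemma shift2:
  assumes "0 \<le> R"
  shows "\<exists>M S0. 0 < M \<and> R < S0 \<and> (\<forall>x w::'a. S0 \<le> norm x \<longrightarrow> norm w \<le> R \<longrightarrow> f (norm (x - w)) \<le> M * f (norm x))"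
proof -
  obtain M S0 where M: "0 < M" "R < S0" "\<And>t. t \<ge> S0 \<Longrightarrow> f (t - R) \<le> M * f t"
    using shift[OF assms] by auto
  have "\<forall>x w::'a. S0 \<le> norm x \<longrightarrow> norm w \<le> R \<longrightarrow> f (norm (x - w)) \<le> M * f (norm x)"
  proof (intro allI impI)
    fix x w :: 'a assume x: "S0 \<le> norm x" and w: "norm w \<le> R"
    have "norm x - R \<le> norm (x - w)" using w norm_triangle_ineq2[of x w] by simp
    moreover have "0 < norm x - R" using x M by simp
    ultimately have "f (norm (x - w)) \<le> f (norm x - R)" by (rule f_mono[rotated])
    also have "\<dots> \<le> M * f (norm x)" using M x by simp
    finally show "f (norm (x - w)) \<le> M * f (norm x)" .
  qed
  then show ?thesis using M by blast
qed

lemma fmax_meas[measurable]: "0 < e \<Longrightarrow> (\<lambda>t. f (max t e)) \<in> borel_measurable borel"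
  by (rule f_max_meas[OF f_mono])

lemma Kint:
  fixes x :: 'a
  assumes x: "1 < norm x" and r: "0 < r"
  shows "(\<integral>\<^sup>+ y. ennreal (indicator {y. r < norm (x - y) \<and> r < norm y} y * (f (norm (x - y)) * f (norm y))) \<partial>lborel)
    \<le> Kfun f TYPE('a) r * ennreal (f (norm x))"
proof -
  have fx: "0 < f (norm x)" using x by (intro f_pos) linarith
  have x0: "x \<noteq> 0" using x by auto
  let ?S = "{y. r < norm (x - y) \<and> r < norm y}"
  have S[measurable]: "?S \<in> sets borel" by measurable
  have "(\<integral>\<^sup>+ y. ennreal (indicator ?S y * (f (norm (x - y)) * f (norm y))) \<partial>lborel)
     = (\<integral>\<^sup>+ y. (indicator ?S y * ennreal (f (max (norm (x - y)) r) * f (max (norm y) r) / f (norm x))) * ennreal (f (norm x)) \<partial>lborel)"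
  proof (intro nn_integral_cong)
    fix y :: 'a
    show "ennreal (indicator ?S y * (f (norm (x - y)) * f (norm y))) =
      indicator ?S y * ennreal (f (max (norm (x - y)) r) * f (max (norm y) r) / f (norm x)) * ennreal (f (norm x))"
    proof (cases "y \<in> ?S")
      case True
      then have p: "0 < f (norm (x - y))" "0 < f (norm y)" using r by (auto intro!: f_pos)
      have m: "max (norm (x - y)) r = norm (x - y)" "max (norm y) r = norm y" using True by auto
      have "ennreal (f (norm (x - y)) * f (norm y) / f (norm x)) * ennreal (f (norm x))
          = ennreal (f (norm (x - y)) * f (norm y) / f (norm x) * f (norm x))"
        using p fx by (subst ennreal_mult') auto
      also have "\<dots> = ennreal (f (norm (x - y)) * f (norm y))" using fx by simp
      finally show ?thesis using True m by simp
    qed simp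
  qed
  also have "\<dots> = (\<integral>\<^sup>+ y. indicator ?S y * ennreal (f (max (norm (x - y)) r) * f (max (norm y) r) / f (norm x)) \<partial>lborel) * ennreal (f (norm x))"
    using r by (intro nn_integral_multc) measurable
  also have "(\<integral>\<^sup>+ y. indicator ?S y * ennreal (f (max (norm (x - y)) r) * f (max (norm y) r) / f (norm x)) \<partial>lborel)
      = (\<integral>\<^sup>+ y. indicator ?S y * ennreal (f (norm (x - y)) * f (norm y) / f (norm x)) \<partial>lborel)"
    by (intro nn_integral_cong) (auto simp: indicator_def)
  also have "\<dots> \<le> Kfun f TYPE('a) r"
    unfolding Kfun_def using x by (intro SUP_upper) (auto simp: x0)
  finally show ?thesis by (simp add: mult_right_mono)
qed

end

context lsetup begin

lemma conv_eq:
  assumes [measurable]: "g \<in> borel_measurable borel" and g0: "\<And>x. 0 \<le> g x"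
  shows "conv nu g x = enn2real (\<integral>\<^sup>+ z. ennreal (nu (x - z) * g z) \<partial>lborel)"
  unfolding conv_def using nu_nonneg g0 by (intro integral_eq_nn_integral) auto

lemma conv_meas[measurable]:
  assumes [measurable]: "g \<in> borel_measurable borel"
  shows "conv nu g \<in> borel_measurable borel"
proof -
  have "(\<lambda>x. \<integral>z. nu (x - z) * g z \<partial>lborel) \<in> borel_measurable lborel"
    by (rule lborel.borel_measurable_lebesgue_integral) measurable
  then show ?thesis unfolding conv_def[abs_def] by simp
qed

lemma conv_nn:
  assumes [measurable]: "g \<in> borel_measurable borel" and g0: "\<And>x. 0 \<le> g x"
  shows "(\<integral>\<^sup>+ x. ennreal (exp (v \<bullet> x)) * (\<integral>\<^sup>+ z. ennreal (nu (x - z) * g z) \<partial>lborel) \<partial>lborel)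
     = (\<integral>\<^sup>+ x. ennreal (exp (v \<bullet> x) * nu x) \<partial>lborel) * (\<integral>\<^sup>+ x. ennreal (exp (v \<bullet> x) * g x) \<partial>lborel)"
proof -
  have "(\<integral>\<^sup>+ x. ennreal (exp (v \<bullet> x)) * (\<integral>\<^sup>+ z. ennreal (nu (x - z) * g z) \<partial>lborel) \<partial>lborel)
      = (\<integral>\<^sup>+ x. (\<integral>\<^sup>+ z. ennreal (exp (v \<bullet> x) * nu (x - z) * g z) \<partial>lborel) \<partial>lborel)"
  proof (intro nn_integral_cong)
    fix x :: 'a
    have "ennreal (exp (v \<bullet> x)) * (\<integral>\<^sup>+ z. ennreal (nu (x - z) * g z) \<partial>lborel)
        = (\<integral>\<^sup>+ z. ennreal (exp (v \<bullet> x)) * ennreal (nu (x - z) * g z) \<partial>lborel)"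
      by (rule nn_integral_cmult[symmetric]) measurable
    also have "\<dots> = (\<integral>\<^sup>+ z. ennreal (exp (v \<bullet> x) * nu (x - z) * g z) \<partial>lborel)"
      by (intro nn_integral_cong) (simp add: ennreal_mult'[symmetric] mult.assoc)
    finally show "ennreal (exp (v \<bullet> x)) * (\<integral>\<^sup>+ z. ennreal (nu (x - z) * g z) \<partial>lborel)
        = (\<integral>\<^sup>+ z. ennreal (exp (v \<bullet> x) * nu (x - z) * g z) \<partial>lborel)" .
  qed
  also have "\<dots> = (\<integral>\<^sup>+ z. (\<integral>\<^sup>+ x. ennreal (exp (v \<bullet> x) * nu (x - z) * g z) \<partial>lborel) \<partial>lborel)"
    by (rule lborel_pair.Fubini'[symmetric]) measurable
  also have "\<dots> = (\<integral>\<^sup>+ z. ennreal (exp (v \<bullet> z) * g z) * (\<integral>\<^sup>+ x. ennreal (exp (v \<bullet> x) * nu x) \<partial>lborel) \<partial>lborel)"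
  proof (intro nn_integral_cong)
    fix z :: 'a
    have "(\<integral>\<^sup>+ x. ennreal (exp (v \<bullet> x) * nu (x - z) * g z) \<partial>lborel)
        = (\<integral>\<^sup>+ x. ennreal (exp (v \<bullet> z) * g z) * ennreal (exp (v \<bullet> (x - z)) * nu (x - z)) \<partial>lborel)"
    proof (intro nn_integral_cong)
      fix x :: 'a
      have "exp (v \<bullet> x) = exp (v \<bullet> z) * exp (v \<bullet> (x - z))"
        by (simp add: inner_diff_right exp_diff)
      then have "exp (v \<bullet> x) * nu (x - z) * g z = (exp (v \<bullet> z) * g z) * (exp (v \<bullet> (x - z)) * nu (x - z))"
        by (simp add: ac_simps)
      then show "ennreal (exp (v \<bullet> x) * nu (x - z) * g z) = ennreal (exp (v \<bullet> z) * g z) * ennreal (exp (v \<bullet> (x - z)) * nu (x - z))"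
        using g0 nu_nonneg by (simp add: ennreal_mult'[symmetric])
    qed
    also have "\<dots> = ennreal (exp (v \<bullet> z) * g z) * (\<integral>\<^sup>+ x. ennreal (exp (v \<bullet> (x - z)) * nu (x - z)) \<partial>lborel)"
      by (rule nn_integral_cmult) measurable
    also have "(\<integral>\<^sup>+ x. ennreal (exp (v \<bullet> (x - z)) * nu (x - z)) \<partial>lborel) = (\<integral>\<^sup>+ x. ennreal (exp (v \<bullet> x) * nu x) \<partial>lborel)"
      by (rule nn_integral_translate[where F="\<lambda>x. ennreal (exp (v \<bullet> x) * nu x)"]) measurable
    finally show "(\<integral>\<^sup>+ x. ennreal (exp (v \<bullet> x) * nu (x - z) * g z) \<partial>lborel)
        = ennreal (exp (v \<bullet> z) * g z) * (\<integral>\<^sup>+ x. ennreal (exp (v \<bullet> x) * nu x) \<partial>lborel)" .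
  qed
  also have "\<dots> = (\<integral>\<^sup>+ z. ennreal (exp (v \<bullet> z) * g z) \<partial>lborel) * (\<integral>\<^sup>+ x. ennreal (exp (v \<bullet> x) * nu x) \<partial>lborel)"
    by (rule nn_integral_multc) measurable
  finally show ?thesis by (simp add: mult.commute)
qed

end

context lsetup begin

lemma Ksmall:
  assumes "0 < \<delta>"
  shows "\<exists>r0. \<forall>r\<ge>r0. Kfun f TYPE('a) r \<le> ennreal \<delta>"
proof -
  have "\<forall>\<^sub>F r in at_top. Kfun f TYPE('a) r < ennreal \<delta>"
    using Klim by (rule order_tendstoD) (use assms in simp)
  then show ?thesis by (auto simp: eventually_at_top_linorder intro: less_imp_le)
qed

lemma int_nn: "integrable lborel g \<Longrightarrow> (\<And>x. 0 \<le> g x) \<Longrightarrow> (\<integral>\<^sup>+ x. ennreal (g x) \<partial>lborel) = ennreal (\<integral>x. g x \<partial>lborel)"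
  by (rule nn_integral_eq_integral) auto

lemma conv_bound:
  assumes gm[measurable]: "g \<in> borel_measurable borel" and g0: "\<And>x. 0 \<le> g x" and gi: "integrable lborel g"
    and Cg: "0 < Cg" and Rg: "0 < Rg" and gb: "\<And>x. Rg \<le> norm x \<Longrightarrow> g x \<le> Cg * f (norm x)"
  shows "\<exists>C R. 0 < C \<and> 0 < R \<and> (\<forall>x. R \<le> norm x \<longrightarrow> (\<integral>\<^sup>+ z. ennreal (nu (x - z) * g z) \<partial>lborel) \<le> ennreal (C * f (norm x)))"
proof -
  obtain r0 where r0: "\<And>r. r \<ge> r0 \<Longrightarrow> Kfun f TYPE('a) r \<le> ennreal 1"
    using Ksmall[of 1] by auto
  define r where "r = max (max Rg r0) 1"
  have r: "0 < r" "Rg \<le> r" "r0 \<le> r" unfolding r_def by auto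
  obtain M S0 where M: "0 < M" "r < S0" and MS: "\<And>x w::'a. S0 \<le> norm x \<Longrightarrow> norm w \<le> r \<Longrightarrow> f (norm (x - w)) \<le> M * f (norm x)"
    using shift2[of r] r by auto
  define ng where "ng = (\<integral>x. g x \<partial>lborel)"
  define nn where "nn = (\<integral>x. nu x \<partial>lborel)"
  have ng: "0 \<le> ng" unfolding ng_def using g0 by simp
  have nn: "0 \<le> nn" unfolding nn_def using nu_nonneg by simp
  define C where "C = C0 * M * ng + Cg * M * nn + C0 * Cg"
  define R where "R = max S0 (2 * r) + 1"
  have Cpos: "0 < C" unfolding C_def using C0_pos Cg M ng nn
    by (smt (verit) mult_nonneg_nonneg mult_pos_pos)
  have "\<forall>x. R \<le> norm x \<longrightarrow> (\<integral>\<^sup>+ z. ennreal (nu (x - z) * g z) \<partial>lborel) \<le> ennreal (C * f (norm x))"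
  proof (intro allI impI)
    fix x :: 'a assume xR: "R \<le> norm x"
    have xS: "S0 \<le> norm x" "2 * r < norm x" "1 < norm x" using xR r unfolding R_def by auto
    have fx: "0 < f (norm x)" using xS by (intro f_pos) linarith
    let ?S = "{y. r < norm (x - y) \<and> r < norm y}"
    define K1 where "K1 = C0 * M * f (norm x)"
    define K2 where "K2 = Cg * M * f (norm x)"
    have K: "0 \<le> K1" "0 \<le> K2" unfolding K1_def K2_def using C0_pos Cg M fx by auto
    have pw: "ennreal (nu (x - z) * g z) \<le> ennreal (K1 * g z) + ennreal (K2 * nu (x - z))
        + ennreal (C0 * Cg) * ennreal (indicator ?S z * (f (max (norm (x - z)) r) * f (max (norm z) r)))" for z
    proof -
      have ge: "0 \<le> ennreal (K1 * g z)" "0 \<le> ennreal (K2 * nu (x - z))"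
        "0 \<le> ennreal (C0 * Cg) * ennreal (indicator ?S z * (f (max (norm (x - z)) r) * f (max (norm z) r)))" by auto
      consider "norm z \<le> r" | "r < norm z" "norm (x - z) \<le> r" | "z \<in> ?S" by (cases "norm z \<le> r"; cases "norm (x - z) \<le> r") auto
      then show ?thesis
      proof cases
        case 1
        have "norm x - r \<le> norm (x - z)" using 1 norm_triangle_ineq2[of x z] by simp
        then have xz: "x - z \<noteq> 0" using xS r by auto
        have "nu (x - z) \<le> C0 * f (norm (x - z))" by (rule C0_up[OF xz])
        also have "\<dots> \<le> C0 * (M * f (norm x))" using MS[OF xS(1) 1] C0_pos by simp
        finally have "nu (x - z) * g z \<le> (C0 * (M * f (norm x))) * g z" using g0[of z] by (rule mult_right_mono)
        then have "nu (x - z) * g z \<le> K1 * g z" unfolding K1_def by (simp add: ac_simps)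
        then have "ennreal (nu (x - z) * g z) \<le> ennreal (K1 * g z)" by (rule ennreal_leI)
        then show ?thesis by (intro en3) simp
      next
        case 2
        have "norm x - r \<le> norm z" using 2 norm_triangle_ineq2[of x "x - z"] by simp
        then have zr: "Rg \<le> norm z" using xS r by auto
        have "g z \<le> Cg * f (norm z)" by (rule gb[OF zr])
        also have "f (norm z) = f (norm (x - (x - z)))" by simp
        also have "\<dots> \<le> M * f (norm x)" by (rule MS[OF xS(1) 2(2)])
        finally have "g z \<le> Cg * (M * f (norm x))" using Cg by simp
        then have "nu (x - z) * g z \<le> nu (x - z) * (Cg * (M * f (norm x)))" using nu_nonneg[of "x - z"]
          by (rule mult_left_mono)
        then have "nu (x - z) * g z \<le> K2 * nu (x - z)" unfolding K2_def by (simp add: ac_simps)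
        then have "ennreal (nu (x - z) * g z) \<le> ennreal (K2 * nu (x - z))" by (rule ennreal_leI)
        then show ?thesis by (intro en3) simp
      next
        case 3
        then have xz: "x - z \<noteq> 0" and zr: "Rg \<le> norm z" using r by auto
        have m: "max (norm (x - z)) r = norm (x - z)" "max (norm z) r = norm z" using 3 by auto
        have "nu (x - z) * g z \<le> (C0 * f (norm (x - z))) * (Cg * f (norm z))"
          using C0_up[OF xz] gb[OF zr] nu_nonneg[of "x - z"] g0[of z] by (intro mult_mono) auto
        also have "\<dots> = (C0 * Cg) * (indicator ?S z * (f (max (norm (x - z)) r) * f (max (norm z) r)))"
          using 3 m by simp
        finally have le: "ennreal (nu (x - z) * g z) \<le> ennreal ((C0 * Cg) * (indicator ?S z * (f (max (norm (x - z)) r) * f (max (norm z) r))))"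
          by (rule ennreal_leI)
        have eq: "ennreal ((C0 * Cg) * (indicator ?S z * (f (max (norm (x - z)) r) * f (max (norm z) r))))
           = ennreal (C0 * Cg) * ennreal (indicator ?S z * (f (max (norm (x - z)) r) * f (max (norm z) r)))"
          using C0_pos Cg by (intro ennreal_mult') simp
        from le have "ennreal (nu (x - z) * g z) \<le> ennreal (C0 * Cg) * ennreal (indicator ?S z * (f (max (norm (x - z)) r) * f (max (norm z) r)))"
          unfolding eq .
        then show ?thesis by (intro en3) simp
      qed
    qed
    let ?c = "\<lambda>z. ennreal (C0 * Cg) * ennreal (indicator ?S z * (f (max (norm (x - z)) r) * f (max (norm z) r)))"
    have m1[measurable]: "(\<lambda>z. ennreal (K1 * g z)) \<in> borel_measurable borel" by measurable
    have m2[measurable]: "(\<lambda>z. ennreal (K2 * nu (x - z))) \<in> borel_measurable borel" by measurable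
    have m3[measurable]: "?c \<in> borel_measurable borel" using r by measurable
    have I1: "(\<integral>\<^sup>+ z. ennreal (K1 * g z) \<partial>lborel) = ennreal (K1 * ng)"
      using K g0 gi unfolding ng_def by (subst int_nn) auto
    have "(\<integral>\<^sup>+ z. ennreal (K2 * nu (x - z)) \<partial>lborel) = (\<integral>\<^sup>+ z. ennreal (K2 * nu z) \<partial>lborel)"
      by (rule nn_integral_reflect[where F="\<lambda>z. ennreal (K2 * nu z)"]) measurable
    also have "\<dots> = ennreal (K2 * nn)"
      using K nu_nonneg nu_int unfolding nn_def by (subst int_nn) auto
    finally have I2: "(\<integral>\<^sup>+ z. ennreal (K2 * nu (x - z)) \<partial>lborel) = ennreal (K2 * nn)" .
    have "(\<integral>\<^sup>+ z. ?c z \<partial>lborel)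
      = ennreal (C0 * Cg) * (\<integral>\<^sup>+ z. ennreal (indicator ?S z * (f (max (norm (x - z)) r) * f (max (norm z) r))) \<partial>lborel)"
      using r by (intro nn_integral_cmult) measurable
    also have "(\<integral>\<^sup>+ z. ennreal (indicator ?S z * (f (max (norm (x - z)) r) * f (max (norm z) r))) \<partial>lborel)
      = (\<integral>\<^sup>+ z. ennreal (indicator ?S z * (f (norm (x - z)) * f (norm z))) \<partial>lborel)"
      by (intro nn_integral_cong) (auto simp: indicator_def)
    finally have "(\<integral>\<^sup>+ z. ?c z \<partial>lborel) = ennreal (C0 * Cg) * (\<integral>\<^sup>+ z. ennreal (indicator ?S z * (f (norm (x - z)) * f (norm z))) \<partial>lborel)" .
    also have "\<dots> \<le> ennreal (C0 * Cg) * (Kfun f TYPE('a) r * ennreal (f (norm x)))"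
      by (intro mult_left_mono Kint[OF xS(3) r(1)]) simp
    also have "\<dots> \<le> ennreal (C0 * Cg) * (ennreal 1 * ennreal (f (norm x)))"
      by (intro mult_left_mono mult_right_mono r0 r) simp_all
    also have "\<dots> = ennreal (C0 * Cg * f (norm x))"
      using C0_pos Cg by (simp add: ennreal_mult')
    finally have I3: "(\<integral>\<^sup>+ z. ?c z \<partial>lborel) \<le> ennreal (C0 * Cg * f (norm x))" .
    have spl: "(\<integral>\<^sup>+ z. ennreal (K1 * g z) + ennreal (K2 * nu (x - z)) + ?c z \<partial>lborel)
      = (\<integral>\<^sup>+ z. ennreal (K1 * g z) \<partial>lborel) + (\<integral>\<^sup>+ z. ennreal (K2 * nu (x - z)) \<partial>lborel) + (\<integral>\<^sup>+ z. ?c z \<partial>lborel)"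
    proof -
      have "(\<integral>\<^sup>+ z. ennreal (K1 * g z) + ennreal (K2 * nu (x - z)) + ?c z \<partial>lborel)
        = (\<integral>\<^sup>+ z. ennreal (K1 * g z) + ennreal (K2 * nu (x - z)) \<partial>lborel) + (\<integral>\<^sup>+ z. ?c z \<partial>lborel)"
        by (rule nn_integral_add) measurable
      also have "(\<integral>\<^sup>+ z. ennreal (K1 * g z) + ennreal (K2 * nu (x - z)) \<partial>lborel)
        = (\<integral>\<^sup>+ z. ennreal (K1 * g z) \<partial>lborel) + (\<integral>\<^sup>+ z. ennreal (K2 * nu (x - z)) \<partial>lborel)"
        by (rule nn_integral_add) measurable
      finally show ?thesis .
    qed
    have "(\<integral>\<^sup>+ z. ennreal (nu (x - z) * g z) \<partial>lborel) \<le> (\<integral>\<^sup>+ z. ennreal (K1 * g z) + ennreal (K2 * nu (x - z)) + ?c z \<partial>lborel)"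
      by (intro nn_integral_mono pw)
    also have "\<dots> \<le> ennreal (K1 * ng) + ennreal (K2 * nn) + ennreal (C0 * Cg * f (norm x))"
      unfolding spl I1 I2 using I3 by (intro add_left_mono)
    also have "\<dots> = ennreal (K1 * ng + K2 * nn + C0 * Cg * f (norm x))"
      using K ng nn C0_pos Cg fx by (simp add: ennreal_plus)
    also have "K1 * ng + K2 * nn + C0 * Cg * f (norm x) = C * f (norm x)"
      unfolding C_def K1_def K2_def by (simp add: algebra_simps)
    finally show "(\<integral>\<^sup>+ z. ennreal (nu (x - z) * g z) \<partial>lborel) \<le> ennreal (C * f (norm x))" .
  qed
  moreover have "0 < R" unfolding R_def using M r by auto
  ultimately show ?thesis using Cpos by blast
qed

end

lemma integrable_bdd_mult:
  fixes u h :: "'a::euclidean_space \<Rightarrow> real"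
  assumes "integrable lborel u" "h \<in> borel_measurable borel" "\<And>z. \<bar>h z\<bar> \<le> B"
  shows "integrable lborel (\<lambda>z. h z * u z)"
proof (rule Bochner_Integration.integrable_bound[where f="\<lambda>z. B * u z"])
  show "integrable lborel (\<lambda>z. B * u z)" using assms(1) by simp
  show "(\<lambda>z. h z * u z) \<in> borel_measurable lborel"
    using assms(1,2) by (simp add: borel_measurable_integrable)
  show "AE z in lborel. norm (h z * u z) \<le> norm (B * u z)"
  proof (intro AE_I2)
    fix z
    have "\<bar>h z\<bar> * \<bar>u z\<bar> \<le> \<bar>B\<bar> * \<bar>u z\<bar>" using assms(3)[of z]
      by (intro mult_right_mono) auto
    then show "norm (h z * u z) \<le> norm (B * u z)" by (simp add: abs_mult)
  qed
qed

lemma dct_gen: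
  fixes \<Phi> :: "real \<Rightarrow> 'a::euclidean_space \<Rightarrow> real" and \<phi> u :: "'a \<Rightarrow> real"
  assumes D[measurable]: "D \<in> sets borel" and u: "integrable lborel u"
    and \<Phi>m[measurable]: "\<And>s. \<Phi> s \<in> borel_measurable borel" and \<phi>m[measurable]: "\<phi> \<in> borel_measurable borel"
    and lim: "\<And>z. z \<in> D \<Longrightarrow> ((\<lambda>s. \<Phi> s z) \<longlongrightarrow> \<phi> z) at_top"
    and bnd: "\<forall>\<^sub>F s in at_top. \<forall>z\<in>D. \<bar>\<Phi> s z\<bar> \<le> B"
  shows "((\<lambda>s. \<integral>z. indicator D z * \<Phi> s z * u z \<partial>lborel) \<longlongrightarrow> (\<integral>z. indicator D z * \<phi> z * u z \<partial>lborel)) at_top"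
proof (rule integral_dominated_convergence_at_top[where w="\<lambda>z. \<bar>B\<bar> * \<bar>u z\<bar>"])
  have um[measurable]: "u \<in> borel_measurable borel" using u by (simp add: borel_measurable_integrable)
  show "(\<lambda>z. indicator D z * \<phi> z * u z) \<in> borel_measurable lborel" by simp
  show "(\<lambda>z. indicator D z * \<Phi> s z * u z) \<in> borel_measurable lborel" for s by simp
  show "integrable lborel (\<lambda>z. \<bar>B\<bar> * \<bar>u z\<bar>)" using u by simp
  show "AE z in lborel. ((\<lambda>s. indicator D z * \<Phi> s z * u z) \<longlongrightarrow> indicator D z * \<phi> z * u z) at_top"
  proof (intro AE_I2)
    fix z show "((\<lambda>s. indicator D z * \<Phi> s z * u z) \<longlongrightarrow> indicator D z * \<phi> z * u z) at_top"
      by (cases "z \<in> D") (auto intro!: tendsto_intros lim)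
  qed
  show "\<forall>\<^sub>F s in at_top. AE z in lborel. norm (indicator D z * \<Phi> s z * u z) \<le> \<bar>B\<bar> * \<bar>u z\<bar>"
    using bnd
  proof (rule eventually_mono)
    fix s assume b: "\<forall>z\<in>D. \<bar>\<Phi> s z\<bar> \<le> B"
    show "AE z in lborel. norm (indicator D z * \<Phi> s z * u z) \<le> \<bar>B\<bar> * \<bar>u z\<bar>"
    proof (intro AE_I2)
      fix z show "norm (indicator D z * \<Phi> s z * u z) \<le> \<bar>B\<bar> * \<bar>u z\<bar>"
      proof (cases "z \<in> D")
        case True
        then have "\<bar>\<Phi> s z\<bar> \<le> \<bar>B\<bar>" using b by force
        then show ?thesis using True by (simp add: abs_mult mult_right_mono)
      qed simp
    qed
  qed
qed

context lsetup begin

definition good :: "('a \<Rightarrow> real) \<Rightarrow> bool" where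
  "good g \<longleftrightarrow> g \<in> borel_measurable borel \<and> (\<forall>x. 0 \<le> g x) \<and> integrable lborel g \<and>
     (\<exists>Cg Rg. 0 < Cg \<and> 0 < Rg \<and> (\<forall>x. Rg \<le> norm x \<longrightarrow> g x \<le> Cg * f (norm x)))"

lemma good_nu: "good nu"
  unfolding good_def
proof (intro conjI exI)
  show "\<forall>x. 1 \<le> norm x \<longrightarrow> nu x \<le> C0 * f (norm x)"
  proof (intro allI impI)
    fix x :: 'a assume "1 \<le> norm x"
    then have "x \<noteq> 0" by auto
    then show "nu x \<le> C0 * f (norm x)" by (rule C0_up)
  qed
qed (use nu_nonneg nu_int C0_pos in auto)

lemma good_conv:
  assumes "good g" shows "good (conv nu g)"
proof -
  have gm[measurable]: "g \<in> borel_measurable borel" and g0: "\<And>x. 0 \<le> g x" and gi: "integrable lborel g"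
    using assms unfolding good_def by auto
  obtain Cg Rg where Cg: "0 < Cg" "0 < Rg" "\<And>x. Rg \<le> norm x \<Longrightarrow> g x \<le> Cg * f (norm x)"
    using assms unfolding good_def by auto
  obtain C R where CR: "0 < C" "0 < R" "\<And>x. R \<le> norm x \<Longrightarrow> (\<integral>\<^sup>+ z. ennreal (nu (x - z) * g z) \<partial>lborel) \<le> ennreal (C * f (norm x))"
    using conv_bound[OF gm g0 gi Cg] by blast
  have ce: "conv nu g x = enn2real (\<integral>\<^sup>+ z. ennreal (nu (x - z) * g z) \<partial>lborel)" for x
    by (rule conv_eq[OF gm g0])
  have c0: "0 \<le> conv nu g x" for x unfolding ce by simp
  have cb: "conv nu g x \<le> C * f (norm x)" if "R \<le> norm x" for x
  proof -
    have "0 < f (norm x)" using that CR by (intro f_pos) linarith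
    then show ?thesis unfolding ce using CR(1) CR(3)[OF that] by (intro enn2real_leI) auto
  qed
  have "(\<integral>\<^sup>+ x. ennreal (conv nu g x) \<partial>lborel) \<le> (\<integral>\<^sup>+ x. ennreal (exp (0 \<bullet> x)) * (\<integral>\<^sup>+ z. ennreal (nu (x - z) * g z) \<partial>lborel) \<partial>lborel)"
    unfolding ce by (intro nn_integral_mono) (simp add: ennreal_enn2real_if)
  also have "\<dots> = (\<integral>\<^sup>+ x. ennreal (exp (0 \<bullet> x) * nu x) \<partial>lborel) * (\<integral>\<^sup>+ x. ennreal (exp (0 \<bullet> x) * g x) \<partial>lborel)"
    by (rule conv_nn[OF gm g0])
  also have "\<dots> = ennreal (\<integral>x. nu x \<partial>lborel) * ennreal (\<integral>x. g x \<partial>lborel)"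
    using int_nn[OF nu_int nu_nonneg] int_nn[OF gi g0] by simp
  also have "\<dots> < \<infinity>" by (simp add: ennreal_mult_less_top)
  finally have fin: "(\<integral>\<^sup>+ x. ennreal (conv nu g x) \<partial>lborel) < \<infinity>" .
  have "integrable lborel (conv nu g)"
  proof (rule integrableI_nonneg)
    show "conv nu g \<in> borel_measurable lborel" by simp
    show "AE x in lborel. 0 \<le> conv nu g x" using c0 by simp
  qed (rule fin)
  then show ?thesis unfolding good_def using c0 cb CR by auto
qed

lemma nconv_1: "nconv nu 1 = nu" by (simp add: nconv_def)

lemma nconv_Suc: "1 \<le> n \<Longrightarrow> nconv nu (Suc n) = conv nu (nconv nu n)"
  by (cases n) (simp_all add: nconv_def)

lemma good_nconv: "1 \<le> n \<Longrightarrow> good (nconv nu n)"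
proof (induction n rule: dec_induct)
  case base then show ?case by (simp add: nconv_def good_nu)
next
  case (step n) then show ?case by (simp add: nconv_Suc good_conv)
qed

lemma mid_bound:
  fixes x :: 'a
  assumes gm[measurable]: "g \<in> borel_measurable borel" and g0: "\<And>x. 0 \<le> g x"
    and Cg: "0 < Cg" and gb: "\<And>x. Rg \<le> norm x \<Longrightarrow> g x \<le> Cg * f (norm x)"
    and r: "Rg \<le> r" "0 < r" and x: "1 < norm x"
  shows "(\<integral>\<^sup>+ z. ennreal (indicator {z. r < norm (x - z) \<and> r < norm z} z * (nu (x - z) * g z)) \<partial>lborel)
     \<le> ennreal (C0 * Cg) * (Kfun f TYPE('a) r * ennreal (f (norm x)))"
proof -
  let ?S = "{z. r < norm (x - z) \<and> r < norm z}"
  have "(\<integral>\<^sup>+ z. ennreal (indicator ?S z * (nu (x - z) * g z)) \<partial>lborel)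
     \<le> (\<integral>\<^sup>+ z. ennreal (C0 * Cg) * ennreal (indicator ?S z * (f (max (norm (x - z)) r) * f (max (norm z) r))) \<partial>lborel)"
  proof (intro nn_integral_mono)
    fix z
    show "ennreal (indicator ?S z * (nu (x - z) * g z)) \<le> ennreal (C0 * Cg) * ennreal (indicator ?S z * (f (max (norm (x - z)) r) * f (max (norm z) r)))"
    proof (cases "z \<in> ?S")
      case True
      then have xz: "x - z \<noteq> 0" and zr: "Rg \<le> norm z" using r by auto
      have m: "max (norm (x - z)) r = norm (x - z)" "max (norm z) r = norm z" using True by auto
      have "nu (x - z) * g z \<le> (C0 * f (norm (x - z))) * (Cg * f (norm z))"
        using C0_up[OF xz] gb[OF zr] nu_nonneg[of "x - z"] g0[of z] by (intro mult_mono) auto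
      also have "\<dots> = (C0 * Cg) * (indicator ?S z * (f (max (norm (x - z)) r) * f (max (norm z) r)))"
        using True m by simp
      finally have le: "ennreal (indicator ?S z * (nu (x - z) * g z)) \<le> ennreal ((C0 * Cg) * (indicator ?S z * (f (max (norm (x - z)) r) * f (max (norm z) r))))"
        using True by (intro ennreal_leI) simp
      have eq: "ennreal ((C0 * Cg) * (indicator ?S z * (f (max (norm (x - z)) r) * f (max (norm z) r))))
         = ennreal (C0 * Cg) * ennreal (indicator ?S z * (f (max (norm (x - z)) r) * f (max (norm z) r)))"
        using C0_pos Cg by (intro ennreal_mult') simp
      from le show ?thesis unfolding eq .
    qed simp
  qed
  also have "\<dots> = ennreal (C0 * Cg) * (\<integral>\<^sup>+ z. ennreal (indicator ?S z * (f (max (norm (x - z)) r) * f (max (norm z) r))) \<partial>lborel)"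
    using r by (intro nn_integral_cmult) measurable
  also have "(\<integral>\<^sup>+ z. ennreal (indicator ?S z * (f (max (norm (x - z)) r) * f (max (norm z) r))) \<partial>lborel)
    = (\<integral>\<^sup>+ z. ennreal (indicator ?S z * (f (norm (x - z)) * f (norm z))) \<partial>lborel)"
    by (intro nn_integral_cong) (auto simp: indicator_def)
  also have "ennreal (C0 * Cg) * \<dots> \<le> ennreal (C0 * Cg) * (Kfun f TYPE('a) r * ennreal (f (norm x)))"
    by (intro mult_left_mono Kint[OF x r(2)]) simp
  finally show ?thesis .
qed

end

context lsetup begin

lemma exp_bound:
  assumes "\<theta> \<in> E" "norm z \<le> R"
  shows "exp (\<kappa> * (\<theta> \<bullet> z)) \<le> exp (\<kappa> * R)"
proof -
  have "\<theta> \<bullet> z \<le> norm \<theta> * norm z" by (rule norm_cauchy_schwarz)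
  also have "\<dots> \<le> R" using E_norm[OF assms(1)] assms(2) by simp
  finally show ?thesis using kappa by (simp add: mult_left_mono)
qed

lemma tail_nn:
  assumes gm[measurable]: "g \<in> borel_measurable borel" and g0: "\<And>x. 0 \<le> g x" and gi: "integrable lborel g"
    and Cg: "0 < Cg" and gb: "\<And>x. Rg \<le> norm x \<Longrightarrow> g x \<le> Cg * f (norm x)"
    and r: "Rg \<le> r" "0 < r" and th: "\<theta> \<in> E"
  shows "(\<integral>\<^sup>+ z. ennreal (indicator {z. r < norm z} z * exp (\<kappa> * (\<theta> \<bullet> z)) * g z) \<partial>lborel)
      \<le> ennreal (C0 * Cg / c) * Kfun f TYPE('a) r"
proof (cases "Kfun f TYPE('a) r = top")
  case True
  then show ?thesis using C0_pos Cg c_pos by (simp add: ennreal_mult_top)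
next
  case False
  define K where "K = enn2real (Kfun f TYPE('a) r)"
  have Kr: "Kfun f TYPE('a) r = ennreal K" "0 \<le> K" using False unfolding K_def by (auto simp: less_top)
  define D where "D k = {z::'a. r < norm z \<and> norm z \<le> r + real k}" for k :: nat
  have Dm[measurable]: "D k \<in> sets borel" for k unfolding D_def by measurable
  have Pk: "(\<integral>\<^sup>+ z. ennreal (indicator (D k) z * exp (\<kappa> * (\<theta> \<bullet> z)) * g z) \<partial>lborel) \<le> ennreal (C0 * Cg * K / c)" for k
  proof -
    define R where "R = r + real k"
    have R: "0 \<le> R" unfolding R_def using r by simp
    obtain M S0 where M: "0 < M" "R < S0" and MS: "\<And>x w::'a. S0 \<le> norm x \<Longrightarrow> norm w \<le> R \<Longrightarrow> f (norm (x - w)) \<le> M * f (norm x)"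
      using shift2[OF R] by auto
    have ns: "norm (s *\<^sub>R \<theta>) = s" if "0 \<le> s" for s using E_norm[OF th] that by simp
    define J where "J s = (\<integral>z. indicator (D k) z * (nu (s *\<^sub>R \<theta> - z) / nu (s *\<^sub>R \<theta>)) * g z \<partial>lborel)" for s
    have lim: "(J \<longlongrightarrow> (\<integral>z. indicator (D k) z * exp (\<kappa> * (\<theta> \<bullet> z)) * g z \<partial>lborel)) at_top"
      unfolding J_def
    proof (rule dct_gen[where B="C0 * M / c"])
      show "integrable lborel g" by (rule gi)
      show "(\<lambda>z. nu (s *\<^sub>R \<theta> - z) / nu (s *\<^sub>R \<theta>)) \<in> borel_measurable borel" for s by measurable
      show "(\<lambda>z. exp (\<kappa> * (\<theta> \<bullet> z))) \<in> borel_measurable borel" by measurable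
      show "((\<lambda>s. nu (s *\<^sub>R \<theta> - z) / nu (s *\<^sub>R \<theta>)) \<longlongrightarrow> exp (\<kappa> * (\<theta> \<bullet> z))) at_top" for z
        by (rule Clim[OF th])
      show "\<forall>\<^sub>F s in at_top. \<forall>z\<in>D k. \<bar>nu (s *\<^sub>R \<theta> - z) / nu (s *\<^sub>R \<theta>)\<bar> \<le> C0 * M / c"
      proof (rule eventually_at_top_linorderI[of "max S0 1"])
        fix s assume s: "max S0 1 \<le> s"
        show "\<forall>z\<in>D k. \<bar>nu (s *\<^sub>R \<theta> - z) / nu (s *\<^sub>R \<theta>)\<bar> \<le> C0 * M / c"
        proof
          fix z assume z: "z \<in> D k"
          have zR: "norm z \<le> R" using z unfolding D_def R_def by auto
          have s0: "0 < s" "S0 \<le> norm (s *\<^sub>R \<theta>)" using s ns[of s] by auto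
          have "s - R \<le> norm (s *\<^sub>R \<theta> - z)" using norm_triangle_ineq2[of "s *\<^sub>R \<theta>" z] ns[of s] zR s0 by simp
          then have nz: "s *\<^sub>R \<theta> - z \<noteq> 0" using s M by auto
          have fs: "0 < f s" using s0 by (intro f_pos)
          have lo: "c * f s \<le> nu (s *\<^sub>R \<theta>)" and p: "0 < nu (s *\<^sub>R \<theta>)" using ray_bounds[OF th s0(1)] by auto
          have "nu (s *\<^sub>R \<theta> - z) \<le> C0 * f (norm (s *\<^sub>R \<theta> - z))" by (rule C0_up[OF nz])
          also have "\<dots> \<le> C0 * (M * f s)" using MS[OF s0(2) zR] ns[of s] s0 C0_pos by simp
          finally have up: "nu (s *\<^sub>R \<theta> - z) \<le> C0 * M * f s" by (simp add: ac_simps)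
          have "nu (s *\<^sub>R \<theta> - z) / nu (s *\<^sub>R \<theta>) \<le> C0 * M * f s / (c * f s)"
            using up lo p nu_nonneg c_pos fs C0_pos M by (intro frac_le) auto
          also have "\<dots> = C0 * M / c" using fs by simp
          finally show "\<bar>nu (s *\<^sub>R \<theta> - z) / nu (s *\<^sub>R \<theta>)\<bar> \<le> C0 * M / c"
            using nu_nonneg p by simp
        qed
      qed
    qed simp
    have ev: "\<forall>\<^sub>F s in at_top. J s \<le> C0 * Cg * K / c"
    proof (rule eventually_at_top_linorderI[of "R + r + 2"])
      fix s assume s: "R + r + 2 \<le> s"
      have s0: "0 < s" "1 < norm (s *\<^sub>R \<theta>)" using s r R ns[of s] by auto
      have fs: "0 < f s" using s0 by (intro f_pos)
      have lo: "c * f s \<le> nu (s *\<^sub>R \<theta>)" and p: "0 < nu (s *\<^sub>R \<theta>)" using ray_bounds[OF th s0(1)] by auto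
      let ?x = "s *\<^sub>R \<theta>"
      let ?S = "{z. r < norm (?x - z) \<and> r < norm z}"
      have "(\<integral>\<^sup>+ z. ennreal (indicator (D k) z * (nu (?x - z) / nu ?x) * g z) \<partial>lborel)
          \<le> (\<integral>\<^sup>+ z. ennreal (1 / nu ?x) * ennreal (indicator ?S z * (nu (?x - z) * g z)) \<partial>lborel)"
      proof (intro nn_integral_mono)
        fix z
        show "ennreal (indicator (D k) z * (nu (?x - z) / nu ?x) * g z) \<le> ennreal (1 / nu ?x) * ennreal (indicator ?S z * (nu (?x - z) * g z))"
        proof (cases "z \<in> D k")
          case True
          have zR: "norm z \<le> R" "r < norm z" using True unfolding D_def R_def by auto
          have "s - R \<le> norm (?x - z)" using norm_triangle_ineq2[of ?x z] ns[of s] zR s0 by simp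
          then have "z \<in> ?S" using zR s by auto
          then show ?thesis using True p nu_nonneg[of "?x - z"] g0[of z]
            by (simp add: ennreal_mult'[symmetric])
        qed simp
      qed
      also have "\<dots> = ennreal (1 / nu ?x) * (\<integral>\<^sup>+ z. ennreal (indicator ?S z * (nu (?x - z) * g z)) \<partial>lborel)"
        by (intro nn_integral_cmult) measurable
      also have "\<dots> \<le> ennreal (1 / nu ?x) * (ennreal (C0 * Cg) * (Kfun f TYPE('a) r * ennreal (f (norm ?x))))"
        by (intro mult_left_mono mid_bound[OF gm g0 Cg gb r s0(2)] zero_le)
      also have "\<dots> = ennreal (C0 * Cg * K * f s / nu ?x)"
        using Kr p C0_pos Cg fs ns[of s] s0 by (simp add: ennreal_mult'[symmetric] ac_simps)
      also have "\<dots> \<le> ennreal (C0 * Cg * K / c)"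
      proof (intro ennreal_leI)
        have "C0 * Cg * K * f s / nu ?x \<le> C0 * Cg * K * f s / (c * f s)"
          using lo p c_pos fs C0_pos Cg Kr(2) by (intro divide_left_mono) auto
        also have "\<dots> = C0 * Cg * K / c" using fs by simp
        finally show "C0 * Cg * K * f s / nu ?x \<le> C0 * Cg * K / c" .
      qed
      finally have le: "(\<integral>\<^sup>+ z. ennreal (indicator (D k) z * (nu (?x - z) / nu ?x) * g z) \<partial>lborel) \<le> ennreal (C0 * Cg * K / c)" .
      have "J s = enn2real (\<integral>\<^sup>+ z. ennreal (indicator (D k) z * (nu (?x - z) / nu ?x) * g z) \<partial>lborel)"
        unfolding J_def using p nu_nonneg g0 by (intro integral_eq_nn_integral) auto
      also have "\<dots> \<le> C0 * Cg * K / c"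
        using le C0_pos Cg Kr(2) c_pos by (intro enn2real_leI) auto
      finally show "J s \<le> C0 * Cg * K / c" .
    qed
    have J_le: "(\<integral>z. indicator (D k) z * exp (\<kappa> * (\<theta> \<bullet> z)) * g z \<partial>lborel) \<le> C0 * Cg * K / c"
      by (rule tendsto_upperbound[OF lim ev]) simp
    have int: "integrable lborel (\<lambda>z. indicator (D k) z * exp (\<kappa> * (\<theta> \<bullet> z)) * g z)"
    proof (rule integrable_bdd_mult[OF gi])
      show "(\<lambda>z. indicator (D k) z * exp (\<kappa> * (\<theta> \<bullet> z))) \<in> borel_measurable borel" by measurable
      show "\<bar>indicator (D k) z * exp (\<kappa> * (\<theta> \<bullet> z))\<bar> \<le> exp (\<kappa> * R)" for z
      proof (cases "z \<in> D k")
        case True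
        then have "norm z \<le> R" unfolding D_def R_def by auto
        then show ?thesis using True exp_bound[OF th] by simp
      qed simp
    qed
    have "(\<integral>\<^sup>+ z. ennreal (indicator (D k) z * exp (\<kappa> * (\<theta> \<bullet> z)) * g z) \<partial>lborel)
       = ennreal (\<integral>z. indicator (D k) z * exp (\<kappa> * (\<theta> \<bullet> z)) * g z \<partial>lborel)"
      using int g0 by (intro nn_integral_eq_integral) auto
    also have "\<dots> \<le> ennreal (C0 * Cg * K / c)" using J_le by (rule ennreal_leI)
    finally show ?thesis .
  qed
  let ?F = "\<lambda>k z. ennreal (indicator (D k) z * exp (\<kappa> * (\<theta> \<bullet> z)) * g z)"
  have inc: "incseq ?F"
  proof (intro monoI le_funI)
    fix k l :: nat and z assume "k \<le> l"
    then have "D k \<subseteq> D l" unfolding D_def by auto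
    then show "?F k z \<le> ?F l z" using g0[of z]
      by (intro ennreal_leI mult_right_mono) (auto simp: indicator_def)
  qed
  have sup: "(SUP k. ?F k z) = ennreal (indicator {z. r < norm z} z * exp (\<kappa> * (\<theta> \<bullet> z)) * g z)" for z
  proof (cases "r < norm z")
    case False
    then have "z \<notin> D k" for k unfolding D_def by auto
    then show ?thesis using False by simp
  next
    case True
    define k0 where "k0 = nat \<lceil>norm z - r\<rceil>"
    have "z \<in> D k0" unfolding D_def k0_def using True by auto linarith
    then have "?F k0 z = ennreal (indicator {z. r < norm z} z * exp (\<kappa> * (\<theta> \<bullet> z)) * g z)"
      using True by simp
    moreover have "?F k z \<le> ennreal (indicator {z. r < norm z} z * exp (\<kappa> * (\<theta> \<bullet> z)) * g z)" for k
      using True g0[of z] by (intro ennreal_leI) (auto simp: indicator_def D_def)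
    ultimately show ?thesis
      by (intro antisym SUP_least SUP_upper2[of k0]) auto
  qed
  have "(\<integral>\<^sup>+ z. ennreal (indicator {z. r < norm z} z * exp (\<kappa> * (\<theta> \<bullet> z)) * g z) \<partial>lborel)
      = (\<integral>\<^sup>+ z. (SUP k. ?F k z) \<partial>lborel)" unfolding sup ..
  also have "\<dots> = (SUP k. \<integral>\<^sup>+ z. ?F k z \<partial>lborel)"
    by (rule nn_integral_monotone_convergence_SUP[OF inc]) measurable
  also have "\<dots> \<le> ennreal (C0 * Cg * K / c)"
    by (intro SUP_least Pk)
  also have "\<dots> = ennreal (C0 * Cg / c) * Kfun f TYPE('a) r"
    using Kr C0_pos Cg c_pos by (simp add: ennreal_mult'[symmetric])
  finally show ?thesis .
qed

end

context lsetup begin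

definition Af :: "'a \<Rightarrow> real" where "Af \<theta> = (\<integral>z. exp (\<kappa> * (\<theta> \<bullet> z)) * nu z \<partial>lborel)"

lemma good_D:
  assumes "good g"
  shows "g \<in> borel_measurable borel" "\<And>x. 0 \<le> g x" "integrable lborel g"
    "\<exists>Cg Rg. 0 < Cg \<and> 0 < Rg \<and> (\<forall>x. Rg \<le> norm x \<longrightarrow> g x \<le> Cg * f (norm x))"
  using assms unfolding good_def by auto

lemma tail_real:
  assumes g: "good g" and Cg: "0 < Cg" and gb: "\<And>x. Rg \<le> norm x \<Longrightarrow> g x \<le> Cg * f (norm x)"
    and r: "Rg \<le> r" "0 < r" and th: "\<theta> \<in> E" and K: "Kfun f TYPE('a) r \<le> ennreal \<delta>" and d: "0 \<le> \<delta>"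
  shows "(\<integral>z. indicator {z. r < norm z} z * exp (\<kappa> * (\<theta> \<bullet> z)) * g z \<partial>lborel) \<le> C0 * Cg * \<delta> / c"
proof -
  note gm[measurable] = good_D(1)[OF g]
  have g0: "\<And>x. 0 \<le> g x" using good_D(2)[OF g] .
  have "(\<integral>\<^sup>+ z. ennreal (indicator {z. r < norm z} z * exp (\<kappa> * (\<theta> \<bullet> z)) * g z) \<partial>lborel)
      \<le> ennreal (C0 * Cg / c) * Kfun f TYPE('a) r"
    by (rule tail_nn[OF gm g0 good_D(3)[OF g] Cg gb r th])
  also have "\<dots> \<le> ennreal (C0 * Cg / c) * ennreal \<delta>" by (intro mult_left_mono K) simp
  also have "\<dots> = ennreal (C0 * Cg * \<delta> / c)" using C0_pos Cg c_pos d by (simp add: ennreal_mult'[symmetric])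
  finally have le: "(\<integral>\<^sup>+ z. ennreal (indicator {z. r < norm z} z * exp (\<kappa> * (\<theta> \<bullet> z)) * g z) \<partial>lborel) \<le> ennreal (C0 * Cg * \<delta> / c)" .
  have "(\<integral>z. indicator {z. r < norm z} z * exp (\<kappa> * (\<theta> \<bullet> z)) * g z \<partial>lborel)
     = enn2real (\<integral>\<^sup>+ z. ennreal (indicator {z. r < norm z} z * exp (\<kappa> * (\<theta> \<bullet> z)) * g z) \<partial>lborel)"
    using g0 by (intro integral_eq_nn_integral) auto
  also have "\<dots> \<le> C0 * Cg * \<delta> / c" using le C0_pos Cg c_pos d by (intro enn2real_leI) auto
  finally show ?thesis .
qed

lemma e_nn_bound:
  assumes g: "good g"
  shows "\<exists>B\<ge>0. \<forall>\<theta>\<in>E. (\<integral>\<^sup>+ z. ennreal (exp (\<kappa> * (\<theta> \<bullet> z)) * g z) \<partial>lborel) \<le> ennreal B"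
proof -
  note gm[measurable] = good_D(1)[OF g]
  have g0: "\<And>x. 0 \<le> g x" using good_D(2)[OF g] .
  have gi: "integrable lborel g" using good_D(3)[OF g] .
  obtain Cg Rg where Cg: "0 < Cg" "0 < Rg" and gb: "\<And>x. Rg \<le> norm x \<Longrightarrow> g x \<le> Cg * f (norm x)"
    using good_D(4)[OF g] by auto
  obtain r0 where r0: "\<And>r. r \<ge> r0 \<Longrightarrow> Kfun f TYPE('a) r \<le> ennreal 1"
    using Ksmall[of 1] by auto
  define r where "r = max (max Rg r0) 1"
  have r: "0 < r" "Rg \<le> r" "r0 \<le> r" unfolding r_def by auto
  define ng where "ng = (\<integral>x. g x \<partial>lborel)"
  have ng: "0 \<le> ng" unfolding ng_def using g0 by simp
  define B where "B = exp (\<kappa> * r) * ng + C0 * Cg / c"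
  have B: "0 \<le> B" unfolding B_def using ng C0_pos Cg c_pos by simp
  have "\<forall>\<theta>\<in>E. (\<integral>\<^sup>+ z. ennreal (exp (\<kappa> * (\<theta> \<bullet> z)) * g z) \<partial>lborel) \<le> ennreal B"
  proof
    fix \<theta> assume th: "\<theta> \<in> E"
    have pw: "ennreal (exp (\<kappa> * (\<theta> \<bullet> z)) * g z) \<le> ennreal (exp (\<kappa> * r) * g z) + ennreal (indicator {z. r < norm z} z * exp (\<kappa> * (\<theta> \<bullet> z)) * g z)" for z
    proof (cases "r < norm z")
      case True then show ?thesis by simp
    next
      case False
      then have "exp (\<kappa> * (\<theta> \<bullet> z)) * g z \<le> exp (\<kappa> * r) * g z"
        using exp_bound[OF th, of z r] g0[of z] by (intro mult_right_mono) auto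
      then show ?thesis by (simp add: add_increasing2 ennreal_leI)
    qed
    have "(\<integral>\<^sup>+ z. ennreal (exp (\<kappa> * (\<theta> \<bullet> z)) * g z) \<partial>lborel)
        \<le> (\<integral>\<^sup>+ z. ennreal (exp (\<kappa> * r) * g z) + ennreal (indicator {z. r < norm z} z * exp (\<kappa> * (\<theta> \<bullet> z)) * g z) \<partial>lborel)"
      by (intro nn_integral_mono pw)
    also have "\<dots> = (\<integral>\<^sup>+ z. ennreal (exp (\<kappa> * r) * g z) \<partial>lborel) + (\<integral>\<^sup>+ z. ennreal (indicator {z. r < norm z} z * exp (\<kappa> * (\<theta> \<bullet> z)) * g z) \<partial>lborel)"
      by (rule nn_integral_add) measurable
    also have "(\<integral>\<^sup>+ z. ennreal (exp (\<kappa> * r) * g z) \<partial>lborel) = ennreal (exp (\<kappa> * r) * ng)"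
      unfolding ng_def using gi g0 by (subst int_nn) auto
    also have "(\<integral>\<^sup>+ z. ennreal (indicator {z. r < norm z} z * exp (\<kappa> * (\<theta> \<bullet> z)) * g z) \<partial>lborel)
        \<le> ennreal (C0 * Cg / c) * Kfun f TYPE('a) r"
      by (rule tail_nn[OF gm g0 gi Cg(1) gb r(2) r(1) th])
    also have "\<dots> \<le> ennreal (C0 * Cg / c) * ennreal 1" by (intro mult_left_mono r0 r) simp
    finally show "(\<integral>\<^sup>+ z. ennreal (exp (\<kappa> * (\<theta> \<bullet> z)) * g z) \<partial>lborel) \<le> ennreal B"
      unfolding B_def using ng C0_pos Cg c_pos by (simp add: ennreal_plus ennreal_mult'[symmetric] add_left_mono)
  qed
  then show ?thesis using B by blast
qed

lemma e_int_le:
  assumes g: "good g"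
  shows "\<exists>B\<ge>0. \<forall>\<theta>\<in>E. integrable lborel (\<lambda>z. exp (\<kappa> * (\<theta> \<bullet> z)) * g z) \<and> (\<integral>z. exp (\<kappa> * (\<theta> \<bullet> z)) * g z \<partial>lborel) \<le> B"
proof -
  note gm[measurable] = good_D(1)[OF g]
  have g0: "\<And>x. 0 \<le> g x" using good_D(2)[OF g] .
  obtain B where B: "0 \<le> B" "\<And>\<theta>. \<theta> \<in> E \<Longrightarrow> (\<integral>\<^sup>+ z. ennreal (exp (\<kappa> * (\<theta> \<bullet> z)) * g z) \<partial>lborel) \<le> ennreal B"
    using e_nn_bound[OF g] by auto
  have "\<forall>\<theta>\<in>E. integrable lborel (\<lambda>z. exp (\<kappa> * (\<theta> \<bullet> z)) * g z) \<and> (\<integral>z. exp (\<kappa> * (\<theta> \<bullet> z)) * g z \<partial>lborel) \<le> B"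
  proof
    fix \<theta> assume th: "\<theta> \<in> E"
    have "integrable lborel (\<lambda>z. exp (\<kappa> * (\<theta> \<bullet> z)) * g z)"
    proof (rule integrableI_nonneg)
      show "(\<lambda>z. exp (\<kappa> * (\<theta> \<bullet> z)) * g z) \<in> borel_measurable lborel" by simp
      show "AE x in lborel. 0 \<le> exp (\<kappa> * (\<theta> \<bullet> x)) * g x" using g0 by simp
      show "(\<integral>\<^sup>+ z. ennreal (exp (\<kappa> * (\<theta> \<bullet> z)) * g z) \<partial>lborel) < \<infinity>"
        using B(2)[OF th] by (simp add: le_less_trans)
    qed
    moreover have "(\<integral>z. exp (\<kappa> * (\<theta> \<bullet> z)) * g z \<partial>lborel) \<le> B"
    proof -
      have "(\<integral>z. exp (\<kappa> * (\<theta> \<bullet> z)) * g z \<partial>lborel) = enn2real (\<integral>\<^sup>+ z. ennreal (exp (\<kappa> * (\<theta> \<bullet> z)) * g z) \<partial>lborel)"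
        using g0 by (intro integral_eq_nn_integral) auto
      also have "\<dots> \<le> B" using B th by (intro enn2real_leI) auto
      finally show ?thesis .
    qed
    ultimately show "integrable lborel (\<lambda>z. exp (\<kappa> * (\<theta> \<bullet> z)) * g z) \<and> (\<integral>z. exp (\<kappa> * (\<theta> \<bullet> z)) * g z \<partial>lborel) \<le> B" ..
  qed
  then show ?thesis using B by blast
qed

lemma lap:
  assumes g: "good g" and th: "\<theta> \<in> E"
  shows "(\<integral>x. exp (\<kappa> * (\<theta> \<bullet> x)) * conv nu g x \<partial>lborel) = Af \<theta> * (\<integral>x. exp (\<kappa> * (\<theta> \<bullet> x)) * g x \<partial>lborel)"
proof -
  note gm[measurable] = good_D(1)[OF g]
  have g0: "\<And>x. 0 \<le> g x" using good_D(2)[OF g] .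
  have gi: "integrable lborel g" using good_D(3)[OF g] .
  define H where "H x = (\<integral>\<^sup>+ z. ennreal (nu (x - z) * g z) \<partial>lborel)" for x
  have Hm[measurable]: "H \<in> borel_measurable lborel" unfolding H_def[abs_def]
    by (rule lborel.borel_measurable_nn_integral) measurable
  have "(\<integral>\<^sup>+ x. H x \<partial>lborel) = (\<integral>\<^sup>+ x. ennreal (exp (0 \<bullet> x)) * H x \<partial>lborel)" by simp
  also have "\<dots> = (\<integral>\<^sup>+ x. ennreal (exp (0 \<bullet> x) * nu x) \<partial>lborel) * (\<integral>\<^sup>+ x. ennreal (exp (0 \<bullet> x) * g x) \<partial>lborel)"
    unfolding H_def by (rule conv_nn[OF gm g0])
  also have "\<dots> = ennreal (\<integral>x. nu x \<partial>lborel) * ennreal (\<integral>x. g x \<partial>lborel)"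
    using int_nn[OF nu_int nu_nonneg] int_nn[OF gi g0] by simp
  finally have fin: "(\<integral>\<^sup>+ x. H x \<partial>lborel) \<noteq> \<infinity>" by (simp add: ennreal_mult_eq_top_iff)
  have ae: "AE x in lborel. H x \<noteq> \<infinity>" by (rule nn_integral_PInf_AE[OF _ fin]) simp
  have ce: "conv nu g x = enn2real (H x)" for x unfolding H_def by (rule conv_eq[OF gm g0])
  have "(\<integral>\<^sup>+ x. ennreal (exp (\<kappa> * (\<theta> \<bullet> x)) * conv nu g x) \<partial>lborel)
      = (\<integral>\<^sup>+ x. ennreal (exp ((\<kappa> *\<^sub>R \<theta>) \<bullet> x)) * H x \<partial>lborel)"
  proof (rule nn_integral_cong_AE)
    show "AE x in lborel. ennreal (exp (\<kappa> * (\<theta> \<bullet> x)) * conv nu g x) = ennreal (exp ((\<kappa> *\<^sub>R \<theta>) \<bullet> x)) * H x"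
      using ae
    proof (rule AE_mp, intro AE_I2 impI)
      fix x assume "H x \<noteq> \<infinity>"
      then have "ennreal (enn2real (H x)) = H x" by (simp add: less_top)
      then show "ennreal (exp (\<kappa> * (\<theta> \<bullet> x)) * conv nu g x) = ennreal (exp ((\<kappa> *\<^sub>R \<theta>) \<bullet> x)) * H x"
        unfolding ce by (simp add: ennreal_mult')
    qed
  qed
  also have "\<dots> = (\<integral>\<^sup>+ x. ennreal (exp ((\<kappa> *\<^sub>R \<theta>) \<bullet> x) * nu x) \<partial>lborel) * (\<integral>\<^sup>+ x. ennreal (exp ((\<kappa> *\<^sub>R \<theta>) \<bullet> x) * g x) \<partial>lborel)"
    unfolding H_def by (rule conv_nn[OF gm g0])
  finally have eq: "(\<integral>\<^sup>+ x. ennreal (exp (\<kappa> * (\<theta> \<bullet> x)) * conv nu g x) \<partial>lborel)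
     = (\<integral>\<^sup>+ x. ennreal (exp (\<kappa> * (\<theta> \<bullet> x)) * nu x) \<partial>lborel) * (\<integral>\<^sup>+ x. ennreal (exp (\<kappa> * (\<theta> \<bullet> x)) * g x) \<partial>lborel)"
    by simp
  have cg: "good (conv nu g)" by (rule good_conv[OF g])
  have c0: "0 \<le> conv nu g x" for x using good_D(2)[OF cg] .
  have "(\<integral>x. exp (\<kappa> * (\<theta> \<bullet> x)) * conv nu g x \<partial>lborel)
     = enn2real (\<integral>\<^sup>+ x. ennreal (exp (\<kappa> * (\<theta> \<bullet> x)) * conv nu g x) \<partial>lborel)"
    using c0 by (intro integral_eq_nn_integral) (auto simp: good_D(1)[OF cg])
  also have "\<dots> = enn2real (\<integral>\<^sup>+ x. ennreal (exp (\<kappa> * (\<theta> \<bullet> x)) * nu x) \<partial>lborel) * enn2real (\<integral>\<^sup>+ x. ennreal (exp (\<kappa> * (\<theta> \<bullet> x)) * g x) \<partial>lborel)"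
    unfolding eq by (rule enn2real_mult)
  also have "enn2real (\<integral>\<^sup>+ x. ennreal (exp (\<kappa> * (\<theta> \<bullet> x)) * nu x) \<partial>lborel) = Af \<theta>"
    unfolding Af_def using nu_nonneg by (intro integral_eq_nn_integral[symmetric]) auto
  also have "enn2real (\<integral>\<^sup>+ x. ennreal (exp (\<kappa> * (\<theta> \<bullet> x)) * g x) \<partial>lborel) = (\<integral>x. exp (\<kappa> * (\<theta> \<bullet> x)) * g x \<partial>lborel)"
    using g0 by (intro integral_eq_nn_integral[symmetric]) auto
  finally show ?thesis .
qed

lemma lap_pow:
  assumes n: "1 \<le> n" and th: "\<theta> \<in> E"
  shows "(\<integral>x. exp (\<kappa> * (\<theta> \<bullet> x)) * nconv nu n x \<partial>lborel) = Af \<theta> ^ n"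
  using n
proof (induction n rule: dec_induct)
  case base then show ?case by (simp add: nconv_def Af_def)
next
  case (step n)
  have "(\<integral>x. exp (\<kappa> * (\<theta> \<bullet> x)) * nconv nu (Suc n) x \<partial>lborel) = Af \<theta> * (\<integral>x. exp (\<kappa> * (\<theta> \<bullet> x)) * nconv nu n x \<partial>lborel)"
    unfolding nconv_Suc[OF step(1)] by (rule lap[OF good_nconv[OF step(1)] th])
  then show ?case using step by simp
qed

lemma Af_bound: "\<exists>B\<ge>0. \<forall>\<theta>\<in>E. 0 \<le> Af \<theta> \<and> Af \<theta> \<le> B \<and> integrable lborel (\<lambda>z. exp (\<kappa> * (\<theta> \<bullet> z)) * nu z)"
proof -
  obtain B where "0 \<le> B" "\<forall>\<theta>\<in>E. integrable lborel (\<lambda>z. exp (\<kappa> * (\<theta> \<bullet> z)) * nu z) \<and> (\<integral>z. exp (\<kappa> * (\<theta> \<bullet> z)) * nu z \<partial>lborel) \<le> B"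
    using e_int_le[OF good_nu] by auto
  moreover have "0 \<le> Af \<theta>" for \<theta> unfolding Af_def using nu_nonneg by simp
  ultimately show ?thesis unfolding Af_def by blast
qed

end

lemma unif_gen:
  fixes \<Phi> :: "real \<Rightarrow> 'p \<Rightarrow> 'a::euclidean_space \<Rightarrow> real" and \<phi> :: "'p \<Rightarrow> 'a \<Rightarrow> real" and u :: "'a \<Rightarrow> real"
  assumes D[measurable]: "D \<in> sets borel" and u: "integrable lborel u"
    and \<Phi>m[measurable]: "\<And>s p. \<Phi> s p \<in> borel_measurable borel" and \<phi>m[measurable]: "\<And>p. \<phi> p \<in> borel_measurable borel"
    and b\<phi>: "\<And>p z. p \<in> S \<Longrightarrow> z \<in> D \<Longrightarrow> \<bar>\<phi> p z\<bar> \<le> B"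
    and unif: "\<And>e. 0 < e \<Longrightarrow> \<forall>\<^sub>F s in at_top. \<forall>p\<in>S. \<forall>z\<in>D. \<bar>\<Phi> s p z - \<phi> p z\<bar> \<le> e"
  shows "uniform_limit S (\<lambda>s p. \<integral>z. indicator D z * \<Phi> s p z * u z \<partial>lborel) (\<lambda>p. \<integral>z. indicator D z * \<phi> p z * u z \<partial>lborel) at_top"
proof (rule uniform_limitI)
  fix e :: real assume e: "0 < e"
  define U where "U = (\<integral>z. \<bar>u z\<bar> \<partial>lborel)"
  have U: "0 \<le> U" unfolding U_def by simp
  define e' where "e' = e / (2 * (U + 1))"
  have e': "0 < e'" unfolding e'_def using e U by simp
  have e'U: "e' * U < e"
  proof -
    have "e' * U = e * (U / (2 * (U + 1)))" unfolding e'_def by simp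
    also have "U / (2 * (U + 1)) < 1" using U by simp
    then have "e * (U / (2 * (U + 1))) < e * 1" using e by (intro mult_strict_left_mono)
    finally show ?thesis by simp
  qed
  have um[measurable]: "u \<in> borel_measurable borel" using u by (simp add: borel_measurable_integrable)
  show "\<forall>\<^sub>F s in at_top. \<forall>p\<in>S. dist (\<integral>z. indicator D z * \<Phi> s p z * u z \<partial>lborel) (\<integral>z. indicator D z * \<phi> p z * u z \<partial>lborel) < e"
    using unif[OF e']
  proof (rule eventually_mono)
    fix s assume H: "\<forall>p\<in>S. \<forall>z\<in>D. \<bar>\<Phi> s p z - \<phi> p z\<bar> \<le> e'"
    show "\<forall>p\<in>S. dist (\<integral>z. indicator D z * \<Phi> s p z * u z \<partial>lborel) (\<integral>z. indicator D z * \<phi> p z * u z \<partial>lborel) < e"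
    proof
      fix p assume p: "p \<in> S"
      have i1: "integrable lborel (\<lambda>z. (indicator D z * \<Phi> s p z) * u z)"
      proof (rule integrable_bdd_mult[OF u _ , where B="\<bar>B\<bar> + e'"])
        show "(\<lambda>z. indicator D z * \<Phi> s p z) \<in> borel_measurable borel" by measurable
        show "\<bar>indicator D z * \<Phi> s p z\<bar> \<le> \<bar>B\<bar> + e'" for z
        proof (cases "z \<in> D")
          case True
          then have "\<bar>\<Phi> s p z - \<phi> p z\<bar> \<le> e'" "\<bar>\<phi> p z\<bar> \<le> B" using H p b\<phi> by auto
          then show ?thesis using True by auto
        qed (use e' in auto)
      qed
      have i2: "integrable lborel (\<lambda>z. (indicator D z * \<phi> p z) * u z)"
      proof (rule integrable_bdd_mult[OF u _ , where B="\<bar>B\<bar>"])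
        show "(\<lambda>z. indicator D z * \<phi> p z) \<in> borel_measurable borel" by measurable
        show "\<bar>indicator D z * \<phi> p z\<bar> \<le> \<bar>B\<bar>" for z
          using b\<phi>[OF p, of z] by (cases "z \<in> D") auto
      qed
      have "dist (\<integral>z. indicator D z * \<Phi> s p z * u z \<partial>lborel) (\<integral>z. indicator D z * \<phi> p z * u z \<partial>lborel)
          = \<bar>\<integral>z. indicator D z * \<Phi> s p z * u z - indicator D z * \<phi> p z * u z \<partial>lborel\<bar>"
        using i1 i2 by (simp add: dist_real_def)
      also have "\<dots> \<le> (\<integral>z. \<bar>indicator D z * \<Phi> s p z * u z - indicator D z * \<phi> p z * u z\<bar> \<partial>lborel)"
        by (rule integral_abs_bound)
      also have "\<dots> \<le> (\<integral>z. e' * \<bar>u z\<bar> \<partial>lborel)"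
      proof (rule integral_mono)
        show "integrable lborel (\<lambda>z. \<bar>indicator D z * \<Phi> s p z * u z - indicator D z * \<phi> p z * u z\<bar>)"
          using i1 i2 by simp
        show "integrable lborel (\<lambda>z. e' * \<bar>u z\<bar>)" using u by simp
        fix z
        show "\<bar>indicator D z * \<Phi> s p z * u z - indicator D z * \<phi> p z * u z\<bar> \<le> e' * \<bar>u z\<bar>"
        proof (cases "z \<in> D")
          case True
          have "\<bar>indicator D z * \<Phi> s p z * u z - indicator D z * \<phi> p z * u z\<bar> = \<bar>\<Phi> s p z - \<phi> p z\<bar> * \<bar>u z\<bar>"
            using True by (simp add: left_diff_distrib[symmetric] abs_mult)
          also have "\<dots> \<le> e' * \<bar>u z\<bar>" using H p True by (intro mult_right_mono) auto
          finally show ?thesis .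
        qed (use e' in simp)
      qed
      also have "\<dots> = e' * U" unfolding U_def by simp
      finally show "dist (\<integral>z. indicator D z * \<Phi> s p z * u z \<partial>lborel) (\<integral>z. indicator D z * \<phi> p z * u z \<partial>lborel) < e"
        using e'U by simp
    qed
  qed
qed

lemma split_cb:
  fixes F :: "'a::euclidean_space \<Rightarrow> real"
  assumes "integrable lborel F"
  shows "(\<integral>z. F z \<partial>lborel) = (\<integral>z. indicator (cball 0 r) z * F z \<partial>lborel) + (\<integral>z. indicator {z. r < norm z} z * F z \<partial>lborel)"
proof -
  have i: "integrable lborel (\<lambda>z. indicator (cball 0 r) z * F z)" "integrable lborel (\<lambda>z. indicator {z. r < norm z} z * F z)"
    using integrable_mult_indicator[OF _ assms, of "cball 0 r"] integrable_mult_indicator[OF _ assms, of "{z. r < norm z}"]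
    by auto
  have "(\<integral>z. F z \<partial>lborel) = (\<integral>z. indicator (cball 0 r) z * F z + indicator {z. r < norm z} z * F z \<partial>lborel)"
    by (rule Bochner_Integration.integral_cong) (auto simp: indicator_def)
  also have "\<dots> = (\<integral>z. indicator (cball 0 r) z * F z \<partial>lborel) + (\<integral>z. indicator {z. r < norm z} z * F z \<partial>lborel)"
    using i by simp
  finally show ?thesis .
qed

context lsetup begin

lemma target_split:
  assumes g: "good g" and th: "\<theta> \<in> E"
    and ig: "integrable lborel (\<lambda>z. exp (\<kappa> * (\<theta> \<bullet> z)) * g z)"
    and inu: "integrable lborel (\<lambda>z. exp (\<kappa> * (\<theta> \<bullet> z)) * nu z)"
  shows "exp (\<kappa> * (\<theta> \<bullet> y)) * ((\<integral>z. exp (\<kappa> * (\<theta> \<bullet> z)) * g z \<partial>lborel) + Af \<theta> * cv)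
    = (\<integral>z. indicator (cball 0 r) z * exp (\<kappa> * (\<theta> \<bullet> (y + z))) * g z \<partial>lborel)
    + (\<integral>w. indicator (cball 0 r) w * (exp (\<kappa> * (\<theta> \<bullet> (y + w))) * cv) * nu w \<partial>lborel)
    + exp (\<kappa> * (\<theta> \<bullet> y)) * ((\<integral>z. indicator {z. r < norm z} z * exp (\<kappa> * (\<theta> \<bullet> z)) * g z \<partial>lborel)
        + cv * (\<integral>z. indicator {z. r < norm z} z * exp (\<kappa> * (\<theta> \<bullet> z)) * nu z \<partial>lborel))"
proof -
  let ?e = "exp (\<kappa> * (\<theta> \<bullet> y))"
  have ey: "exp (\<kappa> * (\<theta> \<bullet> (y + z))) = ?e * exp (\<kappa> * (\<theta> \<bullet> z))" for z
    by (simp add: inner_add_right distrib_left exp_add)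
  have ey2: "exp (\<kappa> * (\<theta> \<bullet> (z + y))) = ?e * exp (\<kappa> * (\<theta> \<bullet> z))" for z
    by (simp add: inner_add_right distrib_left exp_add)
  have a: "(\<integral>z. indicator (cball 0 r) z * exp (\<kappa> * (\<theta> \<bullet> (y + z))) * g z \<partial>lborel)
      = ?e * (\<integral>z. indicator (cball 0 r) z * (exp (\<kappa> * (\<theta> \<bullet> z)) * g z) \<partial>lborel)"
  proof -
    have "(\<integral>z. indicator (cball 0 r) z * exp (\<kappa> * (\<theta> \<bullet> (y + z))) * g z \<partial>lborel)
      = (\<integral>z. ?e * (indicator (cball 0 r) z * (exp (\<kappa> * (\<theta> \<bullet> z)) * g z)) \<partial>lborel)"
      by (rule Bochner_Integration.integral_cong) (simp_all add: ey ey2 ac_simps)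
    then show ?thesis by simp
  qed
  have b: "(\<integral>w. indicator (cball 0 r) w * (exp (\<kappa> * (\<theta> \<bullet> (y + w))) * cv) * nu w \<partial>lborel)
      = ?e * cv * (\<integral>z. indicator (cball 0 r) z * (exp (\<kappa> * (\<theta> \<bullet> z)) * nu z) \<partial>lborel)"
  proof -
    have "(\<integral>w. indicator (cball 0 r) w * (exp (\<kappa> * (\<theta> \<bullet> (y + w))) * cv) * nu w \<partial>lborel)
      = (\<integral>z. (?e * cv) * (indicator (cball 0 r) z * (exp (\<kappa> * (\<theta> \<bullet> z)) * nu z)) \<partial>lborel)"
      by (rule Bochner_Integration.integral_cong) (simp_all add: ey ey2 ac_simps)
    then show ?thesis by simp
  qed
  have t1: "(\<integral>z. indicator {z. r < norm z} z * exp (\<kappa> * (\<theta> \<bullet> z)) * g z \<partial>lborel)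
     = (\<integral>z. indicator {z. r < norm z} z * (exp (\<kappa> * (\<theta> \<bullet> z)) * g z) \<partial>lborel)"
    by (simp add: ac_simps)
  have t2: "(\<integral>z. indicator {z. r < norm z} z * exp (\<kappa> * (\<theta> \<bullet> z)) * nu z \<partial>lborel)
     = (\<integral>z. indicator {z. r < norm z} z * (exp (\<kappa> * (\<theta> \<bullet> z)) * nu z) \<partial>lborel)"
    by (simp add: ac_simps)
  show ?thesis
    unfolding a b t1 t2 Af_def split_cb[OF ig, of r] split_cb[OF inu, of r]
    by (simp add: algebra_simps)
qed

lemma conv_split:
  assumes g: "good g" and x: "2 * r < norm x" and r: "0 < r"
    and hi: "integrable lborel (\<lambda>z. nu (x - z) * g z)"
  shows "conv nu g x / d
    = (\<integral>z. indicator (cball 0 r) z * (nu (x - z) / d) * g z \<partial>lborel)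
    + (\<integral>w. indicator (cball 0 r) w * (g (x - w) / d) * nu w \<partial>lborel)
    + (\<integral>z. indicator {z. r < norm (x - z) \<and> r < norm z} z * (nu (x - z) * g z) \<partial>lborel) / d"
proof -
  note gm[measurable] = good_D(1)[OF g]
  let ?A = "cball (0::'a) r" and ?B = "{z. norm (x - z) \<le> r}" and ?M = "{z. r < norm (x - z) \<and> r < norm z}"
  have setB[measurable]: "?B \<in> sets borel" by measurable
  have setM[measurable]: "?M \<in> sets borel" by measurable
  have setA[measurable]: "?A \<in> sets borel" by simp
  have iA: "integrable lborel (\<lambda>z. indicator ?A z * (nu (x - z) * g z))"
    using integrable_mult_indicator[OF _ hi, of ?A] by simp
  have iB: "integrable lborel (\<lambda>z. indicator ?B z * (nu (x - z) * g z))"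
    using integrable_mult_indicator[OF _ hi, of ?B] by simp
  have iM: "integrable lborel (\<lambda>z. indicator ?M z * (nu (x - z) * g z))"
    using integrable_mult_indicator[OF _ hi, of ?M] by simp
  have "conv nu g x = (\<integral>z. indicator ?A z * (nu (x - z) * g z) + indicator ?B z * (nu (x - z) * g z) + indicator ?M z * (nu (x - z) * g z) \<partial>lborel)"
    unfolding conv_def
  proof (rule Bochner_Integration.integral_cong[OF refl])
    fix z
    have "\<not> (norm z \<le> r \<and> norm (x - z) \<le> r)"
    proof
      assume "norm z \<le> r \<and> norm (x - z) \<le> r"
      then have "norm x \<le> 2 * r" using norm_triangle_ineq[of z "x - z"] by simp
      then show False using x by simp
    qed
    then show "nu (x - z) * g z = indicator ?A z * (nu (x - z) * g z) + indicator ?B z * (nu (x - z) * g z) + indicator ?M z * (nu (x - z) * g z)"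
      by (auto simp: indicator_def)
  qed
  also have "\<dots> = (\<integral>z. indicator ?A z * (nu (x - z) * g z) \<partial>lborel) + (\<integral>z. indicator ?B z * (nu (x - z) * g z) \<partial>lborel)
      + (\<integral>z. indicator ?M z * (nu (x - z) * g z) \<partial>lborel)"
    using iA iB iM by simp
  also have "(\<integral>z. indicator ?B z * (nu (x - z) * g z) \<partial>lborel) = (\<integral>w. indicator ?A w * (nu w * g (x - w)) \<partial>lborel)"
  proof -
    have "(\<integral>z. indicator ?B z * (nu (x - z) * g z) \<partial>lborel) = (\<integral>z. (\<lambda>w. indicator ?A w * (nu w * g (x - w))) (x - z) \<partial>lborel)"
      by (rule Bochner_Integration.integral_cong) (auto simp: indicator_def)
    also have "\<dots> = (\<integral>w. indicator ?A w * (nu w * g (x - w)) \<partial>lborel)"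
      by (rule integral_reflect) measurable
    finally show ?thesis .
  qed
  finally have eq: "conv nu g x = (\<integral>z. indicator ?A z * (nu (x - z) * g z) \<partial>lborel) + (\<integral>w. indicator ?A w * (nu w * g (x - w)) \<partial>lborel)
      + (\<integral>z. indicator ?M z * (nu (x - z) * g z) \<partial>lborel)" .
  have "conv nu g x / d = (\<integral>z. indicator ?A z * (nu (x - z) * g z) \<partial>lborel) / d + (\<integral>w. indicator ?A w * (nu w * g (x - w)) \<partial>lborel) / d
      + (\<integral>z. indicator ?M z * (nu (x - z) * g z) \<partial>lborel) / d"
    unfolding eq by (simp add: add_divide_distrib)
  also have "(\<integral>z. indicator ?A z * (nu (x - z) * g z) \<partial>lborel) / d = (\<integral>z. indicator ?A z * (nu (x - z) / d) * g z \<partial>lborel)"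
    by (simp add: ac_simps)
  also have "(\<integral>w. indicator ?A w * (nu w * g (x - w)) \<partial>lborel) / d = (\<integral>w. indicator ?A w * (g (x - w) / d) * nu w \<partial>lborel)"
    by (simp add: ac_simps)
  finally show ?thesis .
qed

lemma mid_real:
  fixes x :: 'a
  assumes g: "good g" and Cg: "0 < Cg" and gb: "\<And>x. Rg \<le> norm x \<Longrightarrow> g x \<le> Cg * f (norm x)"
    and r: "Rg \<le> r" "0 < r" and x: "1 < norm x" and K: "Kfun f TYPE('a) r \<le> ennreal \<delta>" and d: "0 \<le> \<delta>"
  shows "0 \<le> (\<integral>z. indicator {z. r < norm (x - z) \<and> r < norm z} z * (nu (x - z) * g z) \<partial>lborel)"
    "(\<integral>z. indicator {z. r < norm (x - z) \<and> r < norm z} z * (nu (x - z) * g z) \<partial>lborel) \<le> C0 * Cg * \<delta> * f (norm x)"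
proof -
  note gm[measurable] = good_D(1)[OF g]
  have g0: "\<And>x. 0 \<le> g x" using good_D(2)[OF g] .
  show "0 \<le> (\<integral>z. indicator {z. r < norm (x - z) \<and> r < norm z} z * (nu (x - z) * g z) \<partial>lborel)"
    using g0 nu_nonneg by (intro integral_nonneg_AE AE_I2) auto
  have fx: "0 < f (norm x)" using x by (intro f_pos) linarith
  have "(\<integral>\<^sup>+ z. ennreal (indicator {z. r < norm (x - z) \<and> r < norm z} z * (nu (x - z) * g z)) \<partial>lborel)
     \<le> ennreal (C0 * Cg) * (Kfun f TYPE('a) r * ennreal (f (norm x)))"
    by (rule mid_bound[OF gm g0 Cg gb r x])
  also have "\<dots> \<le> ennreal (C0 * Cg) * (ennreal \<delta> * ennreal (f (norm x)))"
    by (intro mult_left_mono mult_right_mono K) simp_all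
  also have "\<dots> = ennreal (C0 * Cg * \<delta> * f (norm x))"
    using C0_pos Cg d fx by (simp add: ennreal_mult'[symmetric] ac_simps)
  finally have le: "(\<integral>\<^sup>+ z. ennreal (indicator {z. r < norm (x - z) \<and> r < norm z} z * (nu (x - z) * g z)) \<partial>lborel)
     \<le> ennreal (C0 * Cg * \<delta> * f (norm x))" .
  have "(\<integral>z. indicator {z. r < norm (x - z) \<and> r < norm z} z * (nu (x - z) * g z) \<partial>lborel)
     = enn2real (\<integral>\<^sup>+ z. ennreal (indicator {z. r < norm (x - z) \<and> r < norm z} z * (nu (x - z) * g z)) \<partial>lborel)"
    using g0 nu_nonneg by (intro integral_eq_nn_integral) auto
  also have "\<dots> \<le> C0 * Cg * \<delta> * f (norm x)" using le C0_pos Cg d fx by (intro enn2real_leI) auto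
  finally show "(\<integral>z. indicator {z. r < norm (x - z) \<and> r < norm z} z * (nu (x - z) * g z) \<partial>lborel) \<le> C0 * Cg * \<delta> * f (norm x)" .
qed

end

context lsetup begin

lemma nu_gb: "1 \<le> norm x \<Longrightarrow> nu x \<le> C0 * f (norm x)"
  by (rule C0_up) auto

lemma main_step:
  assumes g: "good g"
    and S: "\<And>\<theta> y. (\<theta>, y) \<in> S \<Longrightarrow> \<theta> \<in> E \<and> norm y \<le> \<rho>"
    and rho: "0 \<le> \<rho>"
    and cgb: "\<And>\<theta>. \<theta> \<in> E \<Longrightarrow> \<bar>cg \<theta>\<bar> \<le> Bc"
    and HA: "\<And>r. 0 < r \<Longrightarrow> uniform_limit S
        (\<lambda>s (\<theta>, y). \<integral>z. indicator (cball 0 r) z * (nu (s *\<^sub>R \<theta> - y - z) / nu (s *\<^sub>R \<theta>)) * g z \<partial>lborel)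
        (\<lambda>(\<theta>, y). \<integral>z. indicator (cball 0 r) z * exp (\<kappa> * (\<theta> \<bullet> (y + z))) * g z \<partial>lborel) at_top"
    and HB: "\<And>r. 0 < r \<Longrightarrow> uniform_limit S
        (\<lambda>s (\<theta>, y). \<integral>w. indicator (cball 0 r) w * (g (s *\<^sub>R \<theta> - y - w) / nu (s *\<^sub>R \<theta>)) * nu w \<partial>lborel)
        (\<lambda>(\<theta>, y). \<integral>w. indicator (cball 0 r) w * (exp (\<kappa> * (\<theta> \<bullet> (y + w))) * cg \<theta>) * nu w \<partial>lborel) at_top"
  shows "uniform_limit S (\<lambda>s (\<theta>, y). conv nu g (s *\<^sub>R \<theta> - y) / nu (s *\<^sub>R \<theta>))
      (\<lambda>(\<theta>, y). exp (\<kappa> * (\<theta> \<bullet> y)) * ((\<integral>z. exp (\<kappa> * (\<theta> \<bullet> z)) * g z \<partial>lborel) + Af \<theta> * cg \<theta>)) at_top"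
proof (rule uniform_limitI)
  fix \<epsilon> :: real assume \<epsilon>: "0 < \<epsilon>"
  note gm[measurable] = good_D(1)[OF g]
  have g0: "\<And>x. 0 \<le> g x" using good_D(2)[OF g] .
  have gi: "integrable lborel g" using good_D(3)[OF g] .
  obtain Cg Rg where Cg: "0 < Cg" "0 < Rg" and gb: "\<And>x. Rg \<le> norm x \<Longrightarrow> g x \<le> Cg * f (norm x)"
    using good_D(4)[OF g] by auto
  obtain Cc Rc where Cc: "0 < Cc" "0 < Rc" and cb: "\<And>x. Rc \<le> norm x \<Longrightarrow> (\<integral>\<^sup>+ z. ennreal (nu (x - z) * g z) \<partial>lborel) \<le> ennreal (Cc * f (norm x))"
    using conv_bound[OF gm g0 gi Cg gb] by blast
  obtain M S0 where M: "0 < M" "\<rho> < S0" and MS: "\<And>x w::'a. S0 \<le> norm x \<Longrightarrow> norm w \<le> \<rho> \<Longrightarrow> f (norm (x - w)) \<le> M * f (norm x)"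
    using shift2[OF rho] by auto
  obtain Bg where Bg: "\<And>\<theta>. \<theta> \<in> E \<Longrightarrow> integrable lborel (\<lambda>z. exp (\<kappa> * (\<theta> \<bullet> z)) * g z)"
    using e_int_le[OF g] by blast
  obtain Ba where Ba: "\<And>\<theta>. \<theta> \<in> E \<Longrightarrow> integrable lborel (\<lambda>z. exp (\<kappa> * (\<theta> \<bullet> z)) * nu z)"
    using Af_bound by blast
  have Bc: "0 \<le> Bc" using cgb[OF th0] by simp
  define Q where "Q = C0 * Cg * M / c + exp (\<kappa> * \<rho>) * (C0 * Cg / c) + exp (\<kappa> * \<rho>) * Bc * (C0 * C0 / c)"
  have Q: "0 \<le> Q" unfolding Q_def using C0_pos Cg M c_pos Bc by simp
  define \<delta> where "\<delta> = \<epsilon> / (4 * (Q + 1))"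
  have \<delta>: "0 < \<delta>" unfolding \<delta>_def using \<epsilon> Q by simp
  have \<delta>Q: "\<delta> * Q < \<epsilon> / 4"
  proof -
    have "\<delta> * Q = \<epsilon> / 4 * (Q / (Q + 1))" unfolding \<delta>_def by simp
    also have "\<epsilon> / 4 * (Q / (Q + 1)) < \<epsilon> / 4 * 1" using Q \<epsilon> by (intro mult_strict_left_mono) auto
    finally show ?thesis by simp
  qed
  obtain r0 where r0: "\<And>r. r \<ge> r0 \<Longrightarrow> Kfun f TYPE('a) r \<le> ennreal \<delta>"
    using Ksmall[OF \<delta>] by auto
  define r where "r = max (max Rg r0) 1"
  have r: "0 < r" "Rg \<le> r" "1 \<le> r" and K: "Kfun f TYPE('a) r \<le> ennreal \<delta>"
    unfolding r_def using r0 by auto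
  have evA: "\<forall>\<^sub>F s in at_top. \<forall>p\<in>S. dist ((\<lambda>s (\<theta>, y). \<integral>z. indicator (cball 0 r) z * (nu (s *\<^sub>R \<theta> - y - z) / nu (s *\<^sub>R \<theta>)) * g z \<partial>lborel) s p)
        ((\<lambda>(\<theta>, y). \<integral>z. indicator (cball 0 r) z * exp (\<kappa> * (\<theta> \<bullet> (y + z))) * g z \<partial>lborel) p) < \<epsilon> / 4"
    using HA[OF r(1)] \<epsilon> by (intro uniform_limitD) auto
  have evB: "\<forall>\<^sub>F s in at_top. \<forall>p\<in>S. dist ((\<lambda>s (\<theta>, y). \<integral>w. indicator (cball 0 r) w * (g (s *\<^sub>R \<theta> - y - w) / nu (s *\<^sub>R \<theta>)) * nu w \<partial>lborel) s p)
        ((\<lambda>(\<theta>, y). \<integral>w. indicator (cball 0 r) w * (exp (\<kappa> * (\<theta> \<bullet> (y + w))) * cg \<theta>) * nu w \<partial>lborel) p) < \<epsilon> / 4"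
    using HB[OF r(1)] \<epsilon> by (intro uniform_limitD) auto
  define s1 where "s1 = max (max S0 (Rc + \<rho>)) (2 * r + \<rho> + 2)"
  have ev0: "\<forall>\<^sub>F s in at_top. s1 \<le> s" by (rule eventually_ge_at_top)
  show "\<forall>\<^sub>F s in at_top. \<forall>p\<in>S. dist ((\<lambda>s (\<theta>, y). conv nu g (s *\<^sub>R \<theta> - y) / nu (s *\<^sub>R \<theta>)) s p)
      ((\<lambda>(\<theta>, y). exp (\<kappa> * (\<theta> \<bullet> y)) * ((\<integral>z. exp (\<kappa> * (\<theta> \<bullet> z)) * g z \<partial>lborel) + Af \<theta> * cg \<theta>)) p) < \<epsilon>"
    using eventually_conj[OF ev0 eventually_conj[OF evA evB]]
  proof (rule eventually_mono, safe)
    fix s \<theta> y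
    assume s1: "s1 \<le> s"
      and dA: "\<forall>p\<in>S. dist ((\<lambda>s (\<theta>, y). \<integral>z. indicator (cball 0 r) z * (nu (s *\<^sub>R \<theta> - y - z) / nu (s *\<^sub>R \<theta>)) * g z \<partial>lborel) s p)
        ((\<lambda>(\<theta>, y). \<integral>z. indicator (cball 0 r) z * exp (\<kappa> * (\<theta> \<bullet> (y + z))) * g z \<partial>lborel) p) < \<epsilon> / 4"
      and dB: "\<forall>p\<in>S. dist ((\<lambda>s (\<theta>, y). \<integral>w. indicator (cball 0 r) w * (g (s *\<^sub>R \<theta> - y - w) / nu (s *\<^sub>R \<theta>)) * nu w \<partial>lborel) s p)
        ((\<lambda>(\<theta>, y). \<integral>w. indicator (cball 0 r) w * (exp (\<kappa> * (\<theta> \<bullet> (y + w))) * cg \<theta>) * nu w \<partial>lborel) p) < \<epsilon> / 4"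
      and p: "(\<theta>, y) \<in> S"
    have th: "\<theta> \<in> E" and y: "norm y \<le> \<rho>" using S[OF p] by auto
    define x where "x = s *\<^sub>R \<theta> - y"
    have s0: "0 < s" and sS0: "S0 \<le> s" using s1 r rho unfolding s1_def by auto
    have ns: "norm (s *\<^sub>R \<theta>) = s" using E_norm[OF th] s0 by simp
    have nx: "s - \<rho> \<le> norm x" unfolding x_def using norm_triangle_ineq2[of "s *\<^sub>R \<theta>" y] ns y by simp
    have x2r: "2 * r < norm x" and x1: "1 < norm x" and xRc: "Rc \<le> norm x"
      using nx s1 r unfolding s1_def by auto
    have fs: "0 < f s" using s0 by (intro f_pos)
    have lo: "c * f s \<le> nu (s *\<^sub>R \<theta>)" and pos: "0 < nu (s *\<^sub>R \<theta>)" using ray_bounds[OF th s0] by auto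
    have fx: "f (norm x) \<le> M * f s" using MS[of "s *\<^sub>R \<theta>" y] ns sS0 y unfolding x_def by simp
    have hi: "integrable lborel (\<lambda>z. nu (x - z) * g z)"
    proof (rule integrableI_nonneg)
      show "(\<lambda>z. nu (x - z) * g z) \<in> borel_measurable lborel" by simp
      show "AE z in lborel. 0 \<le> nu (x - z) * g z" using nu_nonneg g0 by simp
      show "(\<integral>\<^sup>+ z. ennreal (nu (x - z) * g z) \<partial>lborel) < \<infinity>"
        using cb[OF xRc] by (simp add: le_less_trans)
    qed
    define IA where "IA = (\<integral>z. indicator (cball 0 r) z * (nu (s *\<^sub>R \<theta> - y - z) / nu (s *\<^sub>R \<theta>)) * g z \<partial>lborel)"
    define IB where "IB = (\<integral>w. indicator (cball 0 r) w * (g (s *\<^sub>R \<theta> - y - w) / nu (s *\<^sub>R \<theta>)) * nu w \<partial>lborel)"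
    define Im where "Im = (\<integral>z. indicator {z. r < norm (x - z) \<and> r < norm z} z * (nu (x - z) * g z) \<partial>lborel)"
    define aF where "aF = (\<integral>z. indicator (cball 0 r) z * exp (\<kappa> * (\<theta> \<bullet> (y + z))) * g z \<partial>lborel)"
    define bF where "bF = (\<integral>w. indicator (cball 0 r) w * (exp (\<kappa> * (\<theta> \<bullet> (y + w))) * cg \<theta>) * nu w \<partial>lborel)"
    define tg where "tg = (\<integral>z. indicator {z. r < norm z} z * exp (\<kappa> * (\<theta> \<bullet> z)) * g z \<partial>lborel)"
    define tn where "tn = (\<integral>z. indicator {z. r < norm z} z * exp (\<kappa> * (\<theta> \<bullet> z)) * nu z \<partial>lborel)"
    define ey where "ey = exp (\<kappa> * (\<theta> \<bullet> y))"
    have split1: "conv nu g (s *\<^sub>R \<theta> - y) / nu (s *\<^sub>R \<theta>) = IA + IB + Im / nu (s *\<^sub>R \<theta>)"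
      using conv_split[OF g x2r r(1) hi, of "nu (s *\<^sub>R \<theta>)"] unfolding IA_def IB_def Im_def x_def by simp
    have split2: "exp (\<kappa> * (\<theta> \<bullet> y)) * ((\<integral>z. exp (\<kappa> * (\<theta> \<bullet> z)) * g z \<partial>lborel) + Af \<theta> * cg \<theta>)
        = aF + bF + ey * (tg + cg \<theta> * tn)"
      unfolding aF_def bF_def tg_def tn_def ey_def by (rule target_split[OF g th Bg[OF th] Ba[OF th]])
    have split3: "exp (\<kappa> * (\<theta> \<bullet> y)) * ((\<integral>z. exp (\<kappa> * (\<theta> \<bullet> z)) * g z \<partial>lborel) + Af \<theta> * cg \<theta>)
        = aF + bF + ey * tg + ey * (cg \<theta> * tn)"
      unfolding split2 by (simp add: distrib_left)
    have dA': "\<bar>IA - aF\<bar> < \<epsilon> / 4" using dA p unfolding IA_def aF_def by (auto simp: dist_real_def)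
    have dB': "\<bar>IB - bF\<bar> < \<epsilon> / 4" using dB p unfolding IB_def bF_def by (auto simp: dist_real_def)
    have Im: "0 \<le> Im" "Im \<le> C0 * Cg * \<delta> * f (norm x)"
      unfolding Im_def using mid_real[OF g Cg(1) gb r(2) r(1) x1 K less_imp_le[OF \<delta>]] by auto
    have Im0: "0 \<le> Im / nu (s *\<^sub>R \<theta>)" using Im pos by simp
    have Im1: "Im / nu (s *\<^sub>R \<theta>) \<le> \<delta> * (C0 * Cg * M / c)"
    proof -
      have "Im / nu (s *\<^sub>R \<theta>) \<le> (C0 * Cg * \<delta> * (M * f s)) / (c * f s)"
      proof (rule frac_le)
        show "0 \<le> C0 * Cg * \<delta> * (M * f s)" using C0_pos Cg \<delta> M fs by simp
        show "Im \<le> C0 * Cg * \<delta> * (M * f s)"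
          using Im(2) fx C0_pos Cg \<delta> by (smt (verit) mult_left_mono mult_nonneg_nonneg)
        show "0 < c * f s" using c_pos fs by simp
        show "c * f s \<le> nu (s *\<^sub>R \<theta>)" by (rule lo)
      qed
      also have "\<dots> = \<delta> * (C0 * Cg * M / c)" using fs by (simp add: field_simps)
      finally show ?thesis .
    qed
    have ey0: "0 < ey" unfolding ey_def by simp
    have ey1: "ey \<le> exp (\<kappa> * \<rho>)" unfolding ey_def by (rule exp_bound[OF th y])
    have tg0: "0 \<le> tg" unfolding tg_def using g0 by (intro integral_nonneg_AE AE_I2) simp
    have tg1: "tg \<le> C0 * Cg * \<delta> / c" unfolding tg_def
      by (rule tail_real[OF g Cg(1) gb r(2) r(1) th K less_imp_le[OF \<delta>]])
    have tn0: "0 \<le> tn" unfolding tn_def using nu_nonneg by (intro integral_nonneg_AE AE_I2) simp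
    have tn1: "tn \<le> C0 * C0 * \<delta> / c" unfolding tn_def
      by (rule tail_real[OF good_nu C0_pos nu_gb r(3) r(1) th K less_imp_le[OF \<delta>]])
    have T1: "ey * tg \<le> \<delta> * (exp (\<kappa> * \<rho>) * (C0 * Cg / c))"
    proof -
      have "ey * tg \<le> exp (\<kappa> * \<rho>) * (C0 * Cg * \<delta> / c)"
        using ey0 ey1 tg0 tg1 by (intro mult_mono) auto
      then show ?thesis by (simp add: field_simps)
    qed
    have T2: "\<bar>ey * (cg \<theta> * tn)\<bar> \<le> \<delta> * (exp (\<kappa> * \<rho>) * Bc * (C0 * C0 / c))"
    proof -
      have "\<bar>ey * (cg \<theta> * tn)\<bar> = ey * (\<bar>cg \<theta>\<bar> * tn)" using ey0 tn0 by (simp add: abs_mult)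
      also have "\<dots> \<le> exp (\<kappa> * \<rho>) * (Bc * (C0 * C0 * \<delta> / c))"
        using ey0 ey1 tn0 tn1 cgb[OF th] Bc by (intro mult_mono) auto
      finally show ?thesis by (simp add: field_simps)
    qed
    have "\<delta> * (C0 * Cg * M / c) + \<delta> * (exp (\<kappa> * \<rho>) * (C0 * Cg / c)) + \<delta> * (exp (\<kappa> * \<rho>) * Bc * (C0 * C0 / c)) = \<delta> * Q"
      unfolding Q_def by (simp add: algebra_simps)
    then have sumQ: "\<delta> * (C0 * Cg * M / c) + \<delta> * (exp (\<kappa> * \<rho>) * (C0 * Cg / c)) + \<delta> * (exp (\<kappa> * \<rho>) * Bc * (C0 * C0 / c)) < \<epsilon> / 4"
      using \<delta>Q by simp
    have "dist (conv nu g (s *\<^sub>R \<theta> - y) / nu (s *\<^sub>R \<theta>))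
        (exp (\<kappa> * (\<theta> \<bullet> y)) * ((\<integral>z. exp (\<kappa> * (\<theta> \<bullet> z)) * g z \<partial>lborel) + Af \<theta> * cg \<theta>)) < \<epsilon>"
      unfolding split1 split3 dist_real_def
      using dA' dB' Im0 Im1 T1 T2 sumQ mult_nonneg_nonneg[OF less_imp_le[OF ey0] tg0] \<epsilon>
      by (simp only: abs_less_iff abs_le_iff) linarith
    then show "dist (conv nu g (s *\<^sub>R \<theta> - y) / nu (s *\<^sub>R \<theta>))
        (exp (\<kappa> * (\<theta> \<bullet> y)) * ((\<integral>z. exp (\<kappa> * (\<theta> \<bullet> z)) * g z \<partial>lborel) + Af \<theta> * cg \<theta>)) < \<epsilon>"
      .
  qed
qed

end

lemma unif_single: "uniform_limit {p} F L at_top \<longleftrightarrow> ((\<lambda>s. F s p) \<longlongrightarrow> L p) at_top"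
  by (simp add: uniform_limit_iff tendsto_iff)

context lsetup begin

lemma ratio_bound:
  assumes g: "good g" and R: "0 \<le> R"
  shows "\<exists>B. \<forall>\<^sub>F s in at_top. \<forall>\<theta>\<in>E. \<forall>w::'a. norm w \<le> R \<longrightarrow> \<bar>g (s *\<^sub>R \<theta> - w) / nu (s *\<^sub>R \<theta>)\<bar> \<le> B"
proof -
  have g0: "\<And>x. 0 \<le> g x" using good_D(2)[OF g] .
  obtain Cg Rg where Cg: "0 < Cg" "0 < Rg" and gb: "\<And>x. Rg \<le> norm x \<Longrightarrow> g x \<le> Cg * f (norm x)"
    using good_D(4)[OF g] by auto
  obtain M S0 where M: "0 < M" "R < S0" and MS: "\<And>x w::'a. S0 \<le> norm x \<Longrightarrow> norm w \<le> R \<Longrightarrow> f (norm (x - w)) \<le> M * f (norm x)"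
    using shift2[OF R] by auto
  have "\<forall>\<^sub>F s in at_top. \<forall>\<theta>\<in>E. \<forall>w::'a. norm w \<le> R \<longrightarrow> \<bar>g (s *\<^sub>R \<theta> - w) / nu (s *\<^sub>R \<theta>)\<bar> \<le> Cg * M / c"
  proof (rule eventually_at_top_linorderI[of "max S0 (R + Rg) + 1"], intro ballI allI impI)
    fix s \<theta> and w :: 'a assume s: "max S0 (R + Rg) + 1 \<le> s" and th: "\<theta> \<in> E" and w: "norm w \<le> R"
    have s0: "0 < s" using s M Cg R by auto
    have ns: "norm (s *\<^sub>R \<theta>) = s" using E_norm[OF th] s0 by simp
    have fs: "0 < f s" using s0 by (intro f_pos)
    have lo: "c * f s \<le> nu (s *\<^sub>R \<theta>)" and pos: "0 < nu (s *\<^sub>R \<theta>)" using ray_bounds[OF th s0] by auto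
    have "s - R \<le> norm (s *\<^sub>R \<theta> - w)" using norm_triangle_ineq2[of "s *\<^sub>R \<theta>" w] ns w by simp
    then have Rgn: "Rg \<le> norm (s *\<^sub>R \<theta> - w)" using s by auto
    have "g (s *\<^sub>R \<theta> - w) \<le> Cg * f (norm (s *\<^sub>R \<theta> - w))" by (rule gb[OF Rgn])
    also have "\<dots> \<le> Cg * (M * f s)" using MS[of "s *\<^sub>R \<theta>" w] ns s w Cg by simp
    finally have up: "g (s *\<^sub>R \<theta> - w) \<le> Cg * M * f s" by (simp add: ac_simps)
    have "g (s *\<^sub>R \<theta> - w) / nu (s *\<^sub>R \<theta>) \<le> Cg * M * f s / (c * f s)"
      using up lo pos g0 c_pos fs Cg M by (intro frac_le) auto
    also have "\<dots> = Cg * M / c" using fs by simp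
    finally show "\<bar>g (s *\<^sub>R \<theta> - w) / nu (s *\<^sub>R \<theta>)\<bar> \<le> Cg * M / c"
      using g0 pos by simp
  qed
  then show ?thesis by blast
qed

lemma cg_bound:
  "\<exists>Bc. \<forall>\<theta>\<in>E. \<bar>real n * Af \<theta> ^ (n - 1)\<bar> \<le> Bc"
proof -
  obtain Bm where Bm: "\<And>\<theta>. \<theta> \<in> E \<Longrightarrow> 0 \<le> Af \<theta> \<and> Af \<theta> \<le> Bm" using Af_bound by blast
  have "\<forall>\<theta>\<in>E. \<bar>real n * Af \<theta> ^ (n - 1)\<bar> \<le> real n * Bm ^ (n - 1)"
  proof
    fix \<theta> assume th: "\<theta> \<in> E"
    have "\<bar>real n * Af \<theta> ^ (n - 1)\<bar> = real n * Af \<theta> ^ (n - 1)" using Bm[OF th] by simp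
    also have "\<dots> \<le> real n * Bm ^ (n - 1)" using Bm[OF th] by (intro mult_left_mono power_mono) auto
    finally show "\<bar>real n * Af \<theta> ^ (n - 1)\<bar> \<le> real n * Bm ^ (n - 1)" .
  qed
  then show ?thesis by blast
qed

lemma lim_value:
  assumes n: "1 \<le> n" and th: "\<theta> \<in> E"
  shows "exp (\<kappa> * (\<theta> \<bullet> y)) * ((\<integral>z. exp (\<kappa> * (\<theta> \<bullet> z)) * nconv nu n z \<partial>lborel) + Af \<theta> * (real n * Af \<theta> ^ (n - 1)))
    = exp (\<kappa> * (\<theta> \<bullet> y)) * real (Suc n) * Af \<theta> ^ (Suc n - 1)"
proof -
  have "Af \<theta> * Af \<theta> ^ (n - 1) = Af \<theta> ^ n" using n by (cases n) auto
  then show ?thesis unfolding lap_pow[OF n th] by (simp add: algebra_simps)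
qed

lemma part_a:
  assumes n: "1 \<le> n"
  shows "\<forall>\<theta>\<in>E. \<forall>y. ((\<lambda>s. nconv nu n (s *\<^sub>R \<theta> - y) / nu (s *\<^sub>R \<theta>)) \<longlongrightarrow> exp (\<kappa> * (\<theta> \<bullet> y)) * real n * Af \<theta> ^ (n - 1)) at_top"
  using n
proof (induction n rule: dec_induct)
  case base
  show ?case using Clim by (simp add: nconv_def)
next
  case (step n)
  note IH = step.IH
  let ?g = "nconv nu n"
  have g: "good ?g" by (rule good_nconv[OF step(1)])
  note gm[measurable] = good_D(1)[OF g]
  have gi: "integrable lborel ?g" using good_D(3)[OF g] .
  obtain Bc where Bc: "\<And>\<theta>. \<theta> \<in> E \<Longrightarrow> \<bar>real n * Af \<theta> ^ (n - 1)\<bar> \<le> Bc" using cg_bound by blast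
  show ?case
  proof (intro ballI allI)
    fix \<theta> y assume th: "\<theta> \<in> E"
    have LimM: "uniform_limit {(\<theta>, y)} (\<lambda>s (\<theta>, y). conv nu ?g (s *\<^sub>R \<theta> - y) / nu (s *\<^sub>R \<theta>))
      (\<lambda>(\<theta>, y). exp (\<kappa> * (\<theta> \<bullet> y)) * ((\<integral>z. exp (\<kappa> * (\<theta> \<bullet> z)) * ?g z \<partial>lborel) + Af \<theta> * (real n * Af \<theta> ^ (n - 1)))) at_top"
    proof (rule main_step[OF g, where \<rho>="norm y" and Bc=Bc])
      show "\<And>\<theta>' y'. (\<theta>', y') \<in> {(\<theta>, y)} \<Longrightarrow> \<theta>' \<in> E \<and> norm y' \<le> norm y" using th by auto
      show "0 \<le> norm y" by simp
      show "\<And>\<theta>. \<theta> \<in> E \<Longrightarrow> \<bar>real n * Af \<theta> ^ (n - 1)\<bar> \<le> Bc" by (rule Bc)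
    next
      fix r :: real assume r: "0 < r"
      obtain B where B: "\<forall>\<^sub>F s in at_top. \<forall>\<theta>\<in>E. \<forall>w::'a. norm w \<le> norm y + r \<longrightarrow> \<bar>nu (s *\<^sub>R \<theta> - w) / nu (s *\<^sub>R \<theta>)\<bar> \<le> B"
        using ratio_bound[OF good_nu, of "norm y + r"] r by auto
      have "((\<lambda>s. \<integral>z. indicator (cball 0 r) z * (nu (s *\<^sub>R \<theta> - y - z) / nu (s *\<^sub>R \<theta>)) * ?g z \<partial>lborel)
          \<longlongrightarrow> (\<integral>z. indicator (cball 0 r) z * exp (\<kappa> * (\<theta> \<bullet> (y + z))) * ?g z \<partial>lborel)) at_top"
      proof (rule dct_gen[where B=B])
        show "cball 0 r \<in> sets borel" by simp
        show "integrable lborel ?g" by (rule gi)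
        show "(\<lambda>z. nu (s *\<^sub>R \<theta> - y - z) / nu (s *\<^sub>R \<theta>)) \<in> borel_measurable borel" for s by measurable
        show "(\<lambda>z. exp (\<kappa> * (\<theta> \<bullet> (y + z)))) \<in> borel_measurable borel" by measurable
        show "((\<lambda>s. nu (s *\<^sub>R \<theta> - y - z) / nu (s *\<^sub>R \<theta>)) \<longlongrightarrow> exp (\<kappa> * (\<theta> \<bullet> (y + z)))) at_top" for z
          using Clim[OF th, of "y + z"] by (simp add: diff_diff_eq)
        show "\<forall>\<^sub>F s in at_top. \<forall>z\<in>cball 0 r. \<bar>nu (s *\<^sub>R \<theta> - y - z) / nu (s *\<^sub>R \<theta>)\<bar> \<le> B"
          using B
        proof (rule eventually_mono, intro ballI)
          fix s and z :: 'a assume H: "\<forall>\<theta>\<in>E. \<forall>w::'a. norm w \<le> norm y + r \<longrightarrow> \<bar>nu (s *\<^sub>R \<theta> - w) / nu (s *\<^sub>R \<theta>)\<bar> \<le> B"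
            and z: "z \<in> cball 0 r"
          have "norm (y + z) \<le> norm y + r" using z norm_triangle_ineq[of y z] by simp
          then show "\<bar>nu (s *\<^sub>R \<theta> - y - z) / nu (s *\<^sub>R \<theta>)\<bar> \<le> B" using H th by (simp add: diff_diff_eq)
        qed
      qed
      then show "uniform_limit {(\<theta>, y)}
        (\<lambda>s (\<theta>, y). \<integral>z. indicator (cball 0 r) z * (nu (s *\<^sub>R \<theta> - y - z) / nu (s *\<^sub>R \<theta>)) * ?g z \<partial>lborel)
        (\<lambda>(\<theta>, y). \<integral>z. indicator (cball 0 r) z * exp (\<kappa> * (\<theta> \<bullet> (y + z))) * ?g z \<partial>lborel) at_top"
        by (simp add: unif_single)
    next
      fix r :: real assume r: "0 < r"
      obtain B where B: "\<forall>\<^sub>F s in at_top. \<forall>\<theta>\<in>E. \<forall>w::'a. norm w \<le> norm y + r \<longrightarrow> \<bar>?g (s *\<^sub>R \<theta> - w) / nu (s *\<^sub>R \<theta>)\<bar> \<le> B"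
        using ratio_bound[OF g, of "norm y + r"] r by auto
      have "((\<lambda>s. \<integral>w. indicator (cball 0 r) w * (?g (s *\<^sub>R \<theta> - y - w) / nu (s *\<^sub>R \<theta>)) * nu w \<partial>lborel)
          \<longlongrightarrow> (\<integral>w. indicator (cball 0 r) w * (exp (\<kappa> * (\<theta> \<bullet> (y + w))) * (real n * Af \<theta> ^ (n - 1))) * nu w \<partial>lborel)) at_top"
      proof (rule dct_gen[where B=B])
        show "cball 0 r \<in> sets borel" by simp
        show "integrable lborel nu" by (rule nu_int)
        show "(\<lambda>w. ?g (s *\<^sub>R \<theta> - y - w) / nu (s *\<^sub>R \<theta>)) \<in> borel_measurable borel" for s by measurable
        show "(\<lambda>w. exp (\<kappa> * (\<theta> \<bullet> (y + w))) * (real n * Af \<theta> ^ (n - 1))) \<in> borel_measurable borel" by measurable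
        show "((\<lambda>s. ?g (s *\<^sub>R \<theta> - y - w) / nu (s *\<^sub>R \<theta>)) \<longlongrightarrow> exp (\<kappa> * (\<theta> \<bullet> (y + w))) * (real n * Af \<theta> ^ (n - 1))) at_top" for w
          using IH th by (simp add: diff_diff_eq mult.assoc)
        show "\<forall>\<^sub>F s in at_top. \<forall>w\<in>cball 0 r. \<bar>?g (s *\<^sub>R \<theta> - y - w) / nu (s *\<^sub>R \<theta>)\<bar> \<le> B"
          using B
        proof (rule eventually_mono, intro ballI)
          fix s and w :: 'a assume H: "\<forall>\<theta>\<in>E. \<forall>w::'a. norm w \<le> norm y + r \<longrightarrow> \<bar>?g (s *\<^sub>R \<theta> - w) / nu (s *\<^sub>R \<theta>)\<bar> \<le> B"
            and w: "w \<in> cball 0 r"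
          have "norm (y + w) \<le> norm y + r" using w norm_triangle_ineq[of y w] by simp
          then show "\<bar>?g (s *\<^sub>R \<theta> - y - w) / nu (s *\<^sub>R \<theta>)\<bar> \<le> B" using H th by (simp add: diff_diff_eq)
        qed
      qed
      then show "uniform_limit {(\<theta>, y)}
        (\<lambda>s (\<theta>, y). \<integral>w. indicator (cball 0 r) w * (?g (s *\<^sub>R \<theta> - y - w) / nu (s *\<^sub>R \<theta>)) * nu w \<partial>lborel)
        (\<lambda>(\<theta>, y). \<integral>w. indicator (cball 0 r) w * (exp (\<kappa> * (\<theta> \<bullet> (y + w))) * (real n * Af \<theta> ^ (n - 1))) * nu w \<partial>lborel) at_top"
        by (simp add: unif_single)
    qed
    then have "((\<lambda>s. conv nu ?g (s *\<^sub>R \<theta> - y) / nu (s *\<^sub>R \<theta>)) \<longlongrightarrow>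
        exp (\<kappa> * (\<theta> \<bullet> y)) * ((\<integral>z. exp (\<kappa> * (\<theta> \<bullet> z)) * ?g z \<partial>lborel) + Af \<theta> * (real n * Af \<theta> ^ (n - 1)))) at_top"
      by (simp add: unif_single)
    then show "((\<lambda>s. nconv nu (Suc n) (s *\<^sub>R \<theta> - y) / nu (s *\<^sub>R \<theta>)) \<longlongrightarrow> exp (\<kappa> * (\<theta> \<bullet> y)) * real (Suc n) * Af \<theta> ^ (Suc n - 1)) at_top"
      unfolding nconv_Suc[OF step(1)] lim_value[OF step(1) th] .
  qed
qed

end

lemma unif_cong_lim:
  assumes "uniform_limit S F L at_top" "\<And>p. p \<in> S \<Longrightarrow> L p = L' p"
  shows "uniform_limit S F L' at_top"
proof (rule uniform_limitI)
  fix e :: real assume "0 < e"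
  from uniform_limitD[OF assms(1) this]
  show "\<forall>\<^sub>F n in at_top. \<forall>x\<in>S. dist (F n x) (L' x) < e"
    by (rule eventually_mono) (use assms(2) in auto)
qed

context lsetup begin

lemma part_b:
  assumes U: "\<And>D. compact D \<Longrightarrow> uniform_limit (E \<times> D) (\<lambda>s (\<theta>, y). nu (s *\<^sub>R \<theta> - y) / nu (s *\<^sub>R \<theta>)) (\<lambda>(\<theta>, y). exp (\<kappa> * (\<theta> \<bullet> y))) at_top"
    and n: "1 \<le> n"
  shows "\<forall>\<rho>>0. uniform_limit (E \<times> ball 0 \<rho>) (\<lambda>s (\<theta>, y). nconv nu n (s *\<^sub>R \<theta> - y) / nu (s *\<^sub>R \<theta>))
     (\<lambda>(\<theta>, y). exp (\<kappa> * (\<theta> \<bullet> y)) * real n * Af \<theta> ^ (n - 1)) at_top"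
  using n
proof (induction n rule: dec_induct)
  case base
  show ?case
  proof (intro allI impI)
    fix \<rho> :: real assume "0 < \<rho>"
    have "E \<times> ball 0 \<rho> \<subseteq> E \<times> cball 0 \<rho>" by (intro Sigma_mono ball_subset_cball) auto
    from uniform_limit_on_subset[OF U[of "cball 0 \<rho>"] this]
    show "uniform_limit (E \<times> ball 0 \<rho>) (\<lambda>s (\<theta>, y). nconv nu 1 (s *\<^sub>R \<theta> - y) / nu (s *\<^sub>R \<theta>))
     (\<lambda>(\<theta>, y). exp (\<kappa> * (\<theta> \<bullet> y)) * real 1 * Af \<theta> ^ (1 - 1)) at_top"
      by (simp add: nconv_def)
  qed
next
  case (step n)
  note IH = step.IH
  let ?g = "nconv nu n"
  have g: "good ?g" by (rule good_nconv[OF step(1)])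
  note gm[measurable] = good_D(1)[OF g]
  have gi: "integrable lborel ?g" using good_D(3)[OF g] .
  obtain Bc where Bc: "\<And>\<theta>. \<theta> \<in> E \<Longrightarrow> \<bar>real n * Af \<theta> ^ (n - 1)\<bar> \<le> Bc" using cg_bound by blast
  have Bc0: "0 \<le> Bc" using Bc[OF th0] by simp
  show ?case
  proof (intro allI impI)
    fix \<rho> :: real assume rho: "0 < \<rho>"
    let ?S = "E \<times> ball (0::'a) \<rho>"
    have LimM: "uniform_limit ?S (\<lambda>s (\<theta>, y). conv nu ?g (s *\<^sub>R \<theta> - y) / nu (s *\<^sub>R \<theta>))
      (\<lambda>(\<theta>, y). exp (\<kappa> * (\<theta> \<bullet> y)) * ((\<integral>z. exp (\<kappa> * (\<theta> \<bullet> z)) * ?g z \<partial>lborel) + Af \<theta> * (real n * Af \<theta> ^ (n - 1)))) at_top"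
    proof (rule main_step[OF g, where \<rho>="\<rho>" and Bc=Bc])
      show "\<And>\<theta> y. (\<theta>, y) \<in> ?S \<Longrightarrow> \<theta> \<in> E \<and> norm y \<le> \<rho>" by auto
      show "0 \<le> \<rho>" using rho by simp
      show "\<And>\<theta>. \<theta> \<in> E \<Longrightarrow> \<bar>real n * Af \<theta> ^ (n - 1)\<bar> \<le> Bc" by (rule Bc)
    next
      fix r :: real assume r: "0 < r"
      have "uniform_limit ?S (\<lambda>s p. \<integral>z. indicator (cball 0 r) z * (nu (s *\<^sub>R fst p - snd p - z) / nu (s *\<^sub>R fst p)) * ?g z \<partial>lborel)
          (\<lambda>p. \<integral>z. indicator (cball 0 r) z * exp (\<kappa> * (fst p \<bullet> (snd p + z))) * ?g z \<partial>lborel) at_top"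
      proof (rule unif_gen[where B="exp (\<kappa> * (\<rho> + r))"])
        show "cball 0 r \<in> sets borel" by simp
        show "integrable lborel ?g" by (rule gi)
        have mm: "(\<lambda>z. nu (a - z) / b) \<in> borel_measurable borel" for a :: 'a and b :: real by measurable
        show "(\<lambda>z. nu (s *\<^sub>R fst p - snd p - z) / nu (s *\<^sub>R fst p)) \<in> borel_measurable borel" for s p
          by (rule mm)
        show "(\<lambda>z. exp (\<kappa> * (fst p \<bullet> (snd p + z)))) \<in> borel_measurable borel" for p
          by (intro borel_measurable_continuous_onI continuous_intros)
        show "\<bar>exp (\<kappa> * (fst p \<bullet> (snd p + z)))\<bar> \<le> exp (\<kappa> * (\<rho> + r))" if "p \<in> ?S" "z \<in> cball 0 r" for p z
        proof -
          have "norm (snd p + z) \<le> \<rho> + r" using that norm_triangle_ineq[of "snd p" z] by auto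
          then show ?thesis using exp_bound[of "fst p" "snd p + z" "\<rho> + r"] that by auto
        qed
        fix e :: real assume e: "0 < e"
        have "\<forall>\<^sub>F s in at_top. \<forall>q\<in>E \<times> cball 0 (\<rho> + r). dist ((\<lambda>s (\<theta>, y). nu (s *\<^sub>R \<theta> - y) / nu (s *\<^sub>R \<theta>)) s q) ((\<lambda>(\<theta>, y). exp (\<kappa> * (\<theta> \<bullet> y))) q) < e"
          by (rule uniform_limitD[OF U e]) simp
        then show "\<forall>\<^sub>F s in at_top. \<forall>p\<in>?S. \<forall>z\<in>cball 0 r. \<bar>nu (s *\<^sub>R fst p - snd p - z) / nu (s *\<^sub>R fst p) - exp (\<kappa> * (fst p \<bullet> (snd p + z)))\<bar> \<le> e"
        proof (rule eventually_mono, intro ballI)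
          fix s p and z :: 'a
          assume H: "\<forall>q\<in>E \<times> cball 0 (\<rho> + r). dist ((\<lambda>s (\<theta>, y). nu (s *\<^sub>R \<theta> - y) / nu (s *\<^sub>R \<theta>)) s q) ((\<lambda>(\<theta>, y). exp (\<kappa> * (\<theta> \<bullet> y))) q) < e"
            and p: "p \<in> ?S" and z: "z \<in> cball 0 r"
          have "norm (snd p + z) \<le> \<rho> + r" using p z norm_triangle_ineq[of "snd p" z] by auto
          then have "(fst p, snd p + z) \<in> E \<times> cball 0 (\<rho> + r)" using p by auto
          from H[rule_format, OF this]
          show "\<bar>nu (s *\<^sub>R fst p - snd p - z) / nu (s *\<^sub>R fst p) - exp (\<kappa> * (fst p \<bullet> (snd p + z)))\<bar> \<le> e"
            by (simp add: dist_real_def diff_diff_eq)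
        qed
      qed
      then show "uniform_limit ?S
        (\<lambda>s (\<theta>, y). \<integral>z. indicator (cball 0 r) z * (nu (s *\<^sub>R \<theta> - y - z) / nu (s *\<^sub>R \<theta>)) * ?g z \<partial>lborel)
        (\<lambda>(\<theta>, y). \<integral>z. indicator (cball 0 r) z * exp (\<kappa> * (\<theta> \<bullet> (y + z))) * ?g z \<partial>lborel) at_top"
        unfolding case_prod_unfold .
    next
      fix r :: real assume r: "0 < r"
      have "uniform_limit ?S (\<lambda>s p. \<integral>w. indicator (cball 0 r) w * (?g (s *\<^sub>R fst p - snd p - w) / nu (s *\<^sub>R fst p)) * nu w \<partial>lborel)
          (\<lambda>p. \<integral>w. indicator (cball 0 r) w * (exp (\<kappa> * (fst p \<bullet> (snd p + w))) * (real n * Af (fst p) ^ (n - 1))) * nu w \<partial>lborel) at_top"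
      proof (rule unif_gen[where B="exp (\<kappa> * (\<rho> + r)) * Bc"])
        show "cball 0 r \<in> sets borel" by simp
        show "integrable lborel nu" by (rule nu_int)
        have mm: "(\<lambda>w. ?g (a - w) / b) \<in> borel_measurable borel" for a :: 'a and b :: real by measurable
        show "(\<lambda>w. ?g (s *\<^sub>R fst p - snd p - w) / nu (s *\<^sub>R fst p)) \<in> borel_measurable borel" for s p
          by (rule mm)
        show "(\<lambda>w. exp (\<kappa> * (fst p \<bullet> (snd p + w))) * (real n * Af (fst p) ^ (n - 1))) \<in> borel_measurable borel" for p
          by (intro borel_measurable_continuous_onI continuous_intros)
        show "\<bar>exp (\<kappa> * (fst p \<bullet> (snd p + w))) * (real n * Af (fst p) ^ (n - 1))\<bar> \<le> exp (\<kappa> * (\<rho> + r)) * Bc"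
          if "p \<in> ?S" "w \<in> cball 0 r" for p w
        proof -
          have "norm (snd p + w) \<le> \<rho> + r" using that norm_triangle_ineq[of "snd p" w] by auto
          then have "exp (\<kappa> * (fst p \<bullet> (snd p + w))) \<le> exp (\<kappa> * (\<rho> + r))"
            using exp_bound[of "fst p" "snd p + w" "\<rho> + r"] that by auto
          moreover have "\<bar>real n * Af (fst p) ^ (n - 1)\<bar> \<le> Bc" using Bc that by auto
          ultimately show ?thesis by (simp add: abs_mult mult_mono)
        qed
        fix e :: real assume e: "0 < e"
        have "\<forall>\<^sub>F s in at_top. \<forall>q\<in>E \<times> ball 0 (\<rho> + r + 1). dist ((\<lambda>s (\<theta>, y). ?g (s *\<^sub>R \<theta> - y) / nu (s *\<^sub>R \<theta>)) s q)
            ((\<lambda>(\<theta>, y). exp (\<kappa> * (\<theta> \<bullet> y)) * real n * Af \<theta> ^ (n - 1)) q) < e"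
        proof (rule uniform_limitD[OF _ e])
          show "uniform_limit (E \<times> ball 0 (\<rho> + r + 1)) (\<lambda>s (\<theta>, y). ?g (s *\<^sub>R \<theta> - y) / nu (s *\<^sub>R \<theta>))
            (\<lambda>(\<theta>, y). exp (\<kappa> * (\<theta> \<bullet> y)) * real n * Af \<theta> ^ (n - 1)) at_top"
            by (rule IH[rule_format]) (use rho r in simp)
        qed
        then show "\<forall>\<^sub>F s in at_top. \<forall>p\<in>?S. \<forall>w\<in>cball 0 r. \<bar>?g (s *\<^sub>R fst p - snd p - w) / nu (s *\<^sub>R fst p) - exp (\<kappa> * (fst p \<bullet> (snd p + w))) * (real n * Af (fst p) ^ (n - 1))\<bar> \<le> e"
        proof (rule eventually_mono, intro ballI)
          fix s p and w :: 'a
          assume H: "\<forall>q\<in>E \<times> ball 0 (\<rho> + r + 1). dist ((\<lambda>s (\<theta>, y). ?g (s *\<^sub>R \<theta> - y) / nu (s *\<^sub>R \<theta>)) s q)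
            ((\<lambda>(\<theta>, y). exp (\<kappa> * (\<theta> \<bullet> y)) * real n * Af \<theta> ^ (n - 1)) q) < e"
            and p: "p \<in> ?S" and w: "w \<in> cball 0 r"
          have "norm (snd p + w) < \<rho> + r + 1" using p w norm_triangle_ineq[of "snd p" w] by auto
          then have "(fst p, snd p + w) \<in> E \<times> ball 0 (\<rho> + r + 1)" using p by auto
          from H[rule_format, OF this]
          show "\<bar>?g (s *\<^sub>R fst p - snd p - w) / nu (s *\<^sub>R fst p) - exp (\<kappa> * (fst p \<bullet> (snd p + w))) * (real n * Af (fst p) ^ (n - 1))\<bar> \<le> e"
            by (simp add: dist_real_def diff_diff_eq mult.assoc)
        qed
      qed
      then show "uniform_limit ?S
        (\<lambda>s (\<theta>, y). \<integral>w. indicator (cball 0 r) w * (?g (s *\<^sub>R \<theta> - y - w) / nu (s *\<^sub>R \<theta>)) * nu w \<partial>lborel)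
        (\<lambda>(\<theta>, y). \<integral>w. indicator (cball 0 r) w * (exp (\<kappa> * (\<theta> \<bullet> (y + w))) * (real n * Af \<theta> ^ (n - 1))) * nu w \<partial>lborel) at_top"
        unfolding case_prod_unfold .
    qed
    then have "uniform_limit ?S (\<lambda>s (\<theta>, y). conv nu ?g (s *\<^sub>R \<theta> - y) / nu (s *\<^sub>R \<theta>))
      (\<lambda>(\<theta>, y). exp (\<kappa> * (\<theta> \<bullet> y)) * real (Suc n) * Af \<theta> ^ (Suc n - 1)) at_top"
    proof (rule unif_cong_lim)
      fix p assume "p \<in> ?S"
      then obtain \<theta> y where py: "p = (\<theta>, y)" and th: "\<theta> \<in> E" by auto
      show "(\<lambda>(\<theta>, y). exp (\<kappa> * (\<theta> \<bullet> y)) * ((\<integral>z. exp (\<kappa> * (\<theta> \<bullet> z)) * ?g z \<partial>lborel) + Af \<theta> * (real n * Af \<theta> ^ (n - 1)))) p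
          = (\<lambda>(\<theta>, y). exp (\<kappa> * (\<theta> \<bullet> y)) * real (Suc n) * Af \<theta> ^ (Suc n - 1)) p"
        unfolding py prod.case by (rule lim_value[OF step(1) th])
    qed
    then show "uniform_limit ?S (\<lambda>s (\<theta>, y). nconv nu (Suc n) (s *\<^sub>R \<theta> - y) / nu (s *\<^sub>R \<theta>))
      (\<lambda>(\<theta>, y). exp (\<kappa> * (\<theta> \<bullet> y)) * real (Suc n) * Af \<theta> ^ (Suc n - 1)) at_top"
      unfolding nconv_Suc[OF step(1)] .
  qed
qed

end

theorem lemma6:
  fixes nu :: "'a::euclidean_space \<Rightarrow> real" and f :: "real \<Rightarrow> real"
    and E :: "'a set" and \<kappa> :: real
  assumes nu_nonneg: "\<forall>x. 0 \<le> nu x"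
    and nu_meas: "nu \<in> borel_measurable lborel"
    and nu_finite: "integrable lborel nu"
    and E_sphere: "E \<subseteq> sphere 0 1"
    and kappa: "0 \<le> \<kappa>"
    and B: "condB nu f"
    and C: "condC nu f E \<kappa>"
  shows
    "(\<forall>n\<ge>1. \<forall>\<theta>\<in>E. \<forall>y.
        ((\<lambda>s. nconv nu n (s *\<^sub>R \<theta> - y) / nu (s *\<^sub>R \<theta>)) \<longlongrightarrow>
           exp (\<kappa> * (\<theta> \<bullet> y)) * real n *
             (\<integral>z. exp (\<kappa> * (\<theta> \<bullet> z)) * nu z \<partial>lborel) ^ (n - 1)) at_top)
     \<and>
     ((\<forall>D. compact D \<longrightarrow>
         uniform_limit (E \<times> D) (\<lambda>s (\<theta>, y). nu (s *\<^sub>R \<theta> - y) / nu (s *\<^sub>R \<theta>))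
           (\<lambda>(\<theta>, y). exp (\<kappa> * (\<theta> \<bullet> y))) at_top)
      \<longrightarrow> (\<forall>n\<ge>1. \<forall>\<rho>>0.
         uniform_limit (E \<times> ball 0 \<rho>)
           (\<lambda>s (\<theta>, y). nconv nu n (s *\<^sub>R \<theta> - y) / nu (s *\<^sub>R \<theta>))
           (\<lambda>(\<theta>, y). exp (\<kappa> * (\<theta> \<bullet> y)) * real n *
              (\<integral>z. exp (\<kappa> * (\<theta> \<bullet> z)) * nu z \<partial>lborel) ^ (n - 1)) at_top))"
proof (cases "E = {}")
  case True
  then show ?thesis by (simp add: uniform_limit_iff)
next
  case False
  then obtain th0 where th0: "th0 \<in> E" by auto
  have fpos: "\<And>r. 0 < r \<Longrightarrow> 0 < f r" and fmono: "\<And>r s. 0 < r \<Longrightarrow> r \<le> s \<Longrightarrow> f s \<le> f r"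
    and Klim: "(Kfun f TYPE('a) \<longlongrightarrow> 0) at_top"
    using B unfolding condB_def by auto
  obtain C0 where C0: "0 < C0" "\<And>x. x \<noteq> 0 \<Longrightarrow> nu x \<le> C0 * f (norm x)"
    using B unfolding condB_def by auto
  have Clim: "\<And>\<theta> y. \<theta> \<in> E \<Longrightarrow> ((\<lambda>r. nu (r *\<^sub>R \<theta> - y) / nu (r *\<^sub>R \<theta>)) \<longlongrightarrow> exp (\<kappa> * (\<theta> \<bullet> y))) at_top"
    using C unfolding condC_def by auto
  obtain c where c: "0 < c" "\<And>x. x \<in> GammaE E \<Longrightarrow> c * f (norm x) \<le> nu x"
    using C unfolding condC_def by auto
  interpret L: lsetup nu f E \<kappa> c C0 th0
  proof
    show "\<And>x. 0 \<le> nu x" using nu_nonneg by simp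
    show "nu \<in> borel_measurable borel" using nu_meas by simp
  qed (use nu_finite E_sphere kappa fpos fmono C0 c Klim Clim th0 in auto)
  show ?thesis
  proof
    show "\<forall>n\<ge>1. \<forall>\<theta>\<in>E. \<forall>y.
        ((\<lambda>s. nconv nu n (s *\<^sub>R \<theta> - y) / nu (s *\<^sub>R \<theta>)) \<longlongrightarrow>
           exp (\<kappa> * (\<theta> \<bullet> y)) * real n *
             (\<integral>z. exp (\<kappa> * (\<theta> \<bullet> z)) * nu z \<partial>lborel) ^ (n - 1)) at_top"
      using L.part_a unfolding L.Af_def by blast
    show "(\<forall>D. compact D \<longrightarrow>
         uniform_limit (E \<times> D) (\<lambda>s (\<theta>, y). nu (s *\<^sub>R \<theta> - y) / nu (s *\<^sub>R \<theta>))
           (\<lambda>(\<theta>, y). exp (\<kappa> * (\<theta> \<bullet> y))) at_top)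
      \<longrightarrow> (\<forall>n\<ge>1. \<forall>\<rho>>0.
         uniform_limit (E \<times> ball 0 \<rho>)
           (\<lambda>s (\<theta>, y). nconv nu n (s *\<^sub>R \<theta> - y) / nu (s *\<^sub>R \<theta>))
           (\<lambda>(\<theta>, y). exp (\<kappa> * (\<theta> \<bullet> y)) * real n *
              (\<integral>z. exp (\<kappa> * (\<theta> \<bullet> z)) * nu z \<partial>lborel) ^ (n - 1)) at_top)"
    proof (intro impI allI)
      fix n :: nat and \<rho> :: real
      assume H: "\<forall>D. compact D \<longrightarrow>
         uniform_limit (E \<times> D) (\<lambda>s (\<theta>, y). nu (s *\<^sub>R \<theta> - y) / nu (s *\<^sub>R \<theta>))
           (\<lambda>(\<theta>, y). exp (\<kappa> * (\<theta> \<bullet> y))) at_top"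
        and n: "1 \<le> n" and rho: "0 < \<rho>"
      from L.part_b[OF H[rule_format] n] rho
      show "uniform_limit (E \<times> ball 0 \<rho>)
           (\<lambda>s (\<theta>, y). nconv nu n (s *\<^sub>R \<theta> - y) / nu (s *\<^sub>R \<theta>))
           (\<lambda>(\<theta>, y). exp (\<kappa> * (\<theta> \<bullet> y)) * real n *
              (\<integral>z. exp (\<kappa> * (\<theta> \<bullet> z)) * nu z \<partial>lborel) ^ (n - 1)) at_top"
        unfolding L.Af_def by blast
    qed
  qed
qed


end
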